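(* Let $Z>0$, let $\nu\mapsto\kappa_\nu,a_\nu$ be measurable with $0<\kappa_\nu\le\kappa_M$ and $0\le a_\nu<1$ for all $\nu>0$. Let $Q^\pm,R^\pm\in L^1((0,1)\times(0,\infty))$ satisfy $$0\le Q^\pm_\nu(\mu)\le R^\pm_\nu(\mu)\quad\text{for a.e. }(\mu,\nu)\in(0,1)\times(0,\infty).$$ Let $(I_\nu,T)$ and $(I'_\nu,T')$ be nonnegative solutions, with $I_\nu,I'_\nu\in L^1((0,Z)\times(-1,1)\times(0,\infty))$, of the problem $$(\mu\partial_\tau+\kappa_\nu)I_\nu(\tau,\mu)=\kappa_\nu a_\nu J_\nu(\tau)+\kappa_\nu(1-a_\nu)B_\nu(T(\tau)),\qquad T=T[J],$$ with boundary data $I_\nu(0,\mu)=Q^+_\nu(\mu)$, $I_\nu(Z,-\mu)=Q^-_\nu(\mu)$ ($0<\mu<1$), respectively with $R^\pm$ in place of $Q^\pm$ for $(I',T')$. Then $$I_\nu(\tau,\mu)\le I'_\nu(\tau,\mu)\ \text{ and }\ T(\tau)\le T'(\tau)\quad\text{for a.e. }(\tau,\mu,\nu)\in(0,Z)\times(-1,1)\times(0,\infty).$$ In particular, if $Q^\pm=R^\pm$ a.e., then $I_\nu=I'_\nu$ and $T=T'$ a.e. (uniqueness).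
   Context: Planck function: for $T>0$, $B_\nu(T)=\dfrac{2\hbar\nu^3}{c^2\,(e^{\hbar\nu/(kT)}-1)}$ with fixed positive constants $\hbar,c,k$, and $B_\nu(0)=0$; increasing in $T$. $J_\nu(\tau)=\tfrac12\int_{-1}^1I_\nu(\tau,\mu)d\mu$. $T[J](\tau)$ is the unique $T\ge0$ with $\int_0^\infty\kappa_\nu(1-a_\nu)B_\nu(T)d\nu=\int_0^\infty\kappa_\nu(1-a_\nu)J_\nu(\tau)d\nu$. Solutions are understood in the mild sense: for $\mu>0$, $I_\nu(\tau,\mu)=e^{-\kappa_\nu\tau/\mu}Q^+_\nu(\mu)+\int_0^\tau e^{-\kappa_\nu(\tau-t)/\mu}\frac{\kappa_\nu}\mu\big(a_\nu J_\nu(t)+(1-a_\nu)B_\nu(T(t))\big)dt$; for $\mu<0$, $I_\nu(\tau,\mu)=e^{-\kappa_\nu(Z-\tau)/|\mu|}Q^-_\nu(|\mu|)+\int_\tau^Z e^{-\kappa_\nu(t-\tau)/|\mu|}\frac{\kappa_\nu}{|\mu|}\big(a_\nu J_\nu(t)+(1-a_\nu)B_\nu(T(t))\big)dt$. *)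

theory Defs
  imports "HOL-Analysis.Analysis"
begin

text \<open>Planck function B_nu(T) with physical constants hb (reduced Planck), c (speed of light),
  kB (Boltzmann); B_nu(0) = 0 (and we also set it to 0 for T < 0, which never matters).\<close>
definition planck :: "real \<Rightarrow> real \<Rightarrow> real \<Rightarrow> real \<Rightarrow> real \<Rightarrow> real" where
  "planck hb c kB \<nu> T =
     (if T > 0 then 2 * hb * \<nu> ^ 3 / (c\<^sup>2 * (exp (hb * \<nu> / (kB * T)) - 1)) else 0)"

definition Jmean :: "(real \<Rightarrow> real \<Rightarrow> real \<Rightarrow> real) \<Rightarrow> real \<Rightarrow> real \<Rightarrow> real" where
  "Jmean I \<nu> \<tau> = (1/2) * (LINT \<mu>:{-1<..<1}|lborel. I \<tau> \<mu> \<nu>)"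

text \<open>T = T[J] at depth tau: T tau >= 0 and the radiative equilibrium identity
  int_0^infty kappa (1-a) B_nu(T) dnu = int_0^infty kappa (1-a) J_nu dnu
  (nonnegative integrals, taken in ennreal).\<close>
definition temp_eq ::
  "real \<Rightarrow> real \<Rightarrow> real \<Rightarrow> (real \<Rightarrow> real) \<Rightarrow> (real \<Rightarrow> real)
   \<Rightarrow> (real \<Rightarrow> real \<Rightarrow> real \<Rightarrow> real) \<Rightarrow> real \<Rightarrow> real \<Rightarrow> bool" where
  "temp_eq hb c kB \<kappa> a I \<tau> Tt \<longleftrightarrow>
     Tt \<ge> 0 \<and>
     (\<integral>\<^sup>+ \<nu>. ennreal (\<kappa> \<nu> * (1 - a \<nu>) * planck hb c kB \<nu> Tt) * indicator {0<..} \<nu> \<partial>lborel)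
   = (\<integral>\<^sup>+ \<nu>. ennreal (\<kappa> \<nu> * (1 - a \<nu>) * Jmean I \<nu> \<tau>) * indicator {0<..} \<nu> \<partial>lborel)"

definition src ::
  "real \<Rightarrow> real \<Rightarrow> real \<Rightarrow> (real \<Rightarrow> real) \<Rightarrow> (real \<Rightarrow> real \<Rightarrow> real \<Rightarrow> real)
   \<Rightarrow> (real \<Rightarrow> real) \<Rightarrow> real \<Rightarrow> real \<Rightarrow> real" where
  "src hb c kB a I T \<nu> t = a \<nu> * Jmean I \<nu> t + (1 - a \<nu>) * planck hb c kB \<nu> (T t)"

text \<open>(I, T) is a nonnegative mild solution, with I in L^1((0,Z) x (-1,1) x (0,infty)),
  of the radiative transfer problem with boundary data Qp (incoming at tau = 0) and
  Qm (incoming at tau = Z); boundary data written Q mu nu = Q_nu(mu).\<close>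
definition rte_solution ::
  "real \<Rightarrow> real \<Rightarrow> real \<Rightarrow> real \<Rightarrow> (real \<Rightarrow> real) \<Rightarrow> (real \<Rightarrow> real)
   \<Rightarrow> (real \<Rightarrow> real \<Rightarrow> real) \<Rightarrow> (real \<Rightarrow> real \<Rightarrow> real)
   \<Rightarrow> (real \<Rightarrow> real \<Rightarrow> real \<Rightarrow> real) \<Rightarrow> (real \<Rightarrow> real) \<Rightarrow> bool" where
  "rte_solution hb c kB Z \<kappa> a Qp Qm I T \<longleftrightarrow>
     set_integrable (lborel \<Otimes>\<^sub>M (lborel \<Otimes>\<^sub>M lborel))
        ({0<..<Z} \<times> ({-1<..<1} \<times> {0<..})) (\<lambda>(\<tau>, \<mu>, \<nu>). I \<tau> \<mu> \<nu>)
   \<and> T \<in> borel_measurable lborel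
   \<and> (AE x in lborel \<Otimes>\<^sub>M (lborel \<Otimes>\<^sub>M lborel).
        x \<in> {0<..<Z} \<times> ({-1<..<1} \<times> {0<..}) \<longrightarrow> I (fst x) (fst (snd x)) (snd (snd x)) \<ge> 0)
   \<and> (AE \<tau> in lborel. \<tau> \<in> {0<..<Z} \<longrightarrow> temp_eq hb c kB \<kappa> a I \<tau> (T \<tau>))
   \<and> (AE x in lborel \<Otimes>\<^sub>M (lborel \<Otimes>\<^sub>M lborel).
        let \<tau> = fst x; \<mu> = fst (snd x); \<nu> = snd (snd x) in
        (\<tau> \<in> {0<..<Z} \<and> \<mu> \<in> {0<..<1} \<and> \<nu> > 0 \<longrightarrow>
           ennreal (I \<tau> \<mu> \<nu>) =
             ennreal (exp (- \<kappa> \<nu> * \<tau> / \<mu>) * Qp \<mu> \<nu>)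
           + (\<integral>\<^sup>+ t. ennreal (exp (- \<kappa> \<nu> * (\<tau> - t) / \<mu>) * (\<kappa> \<nu> / \<mu>)
                          * src hb c kB a I T \<nu> t) * indicator {0..\<tau>} t \<partial>lborel))
      \<and> (\<tau> \<in> {0<..<Z} \<and> \<mu> \<in> {-1<..<0} \<and> \<nu> > 0 \<longrightarrow>
           ennreal (I \<tau> \<mu> \<nu>) =
             ennreal (exp (- \<kappa> \<nu> * (Z - \<tau>) / \<bar>\<mu>\<bar>) * Qm \<bar>\<mu>\<bar> \<nu>)
           + (\<integral>\<^sup>+ t. ennreal (exp (- \<kappa> \<nu> * (t - \<tau>) / \<bar>\<mu>\<bar>) * (\<kappa> \<nu> / \<bar>\<mu>\<bar>)
                          * src hb c kB a I T \<nu> t) * indicator {\<tau>..Z} t \<partial>lborel)))"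

end

theory Submission
  imports Defs
begin



lemma planck_nonneg:
  assumes "hb > 0" "c > 0" "kB > 0" "\<nu> > 0"
  shows "0 \<le> planck hb c kB \<nu> T"
proof (cases "T > 0")
  case True
  have "hb * \<nu> / (kB * T) > 0" using assms True by simp
  hence "exp (hb * \<nu> / (kB * T)) > 1" by simp
  thus ?thesis using assms True unfolding planck_def by simp
qed (simp add: planck_def)

lemma planck_strict:
  assumes "hb > 0" "c > 0" "kB > 0" "\<nu> > 0" "T1 < T2" "T2 > 0"
  shows "planck hb c kB \<nu> T1 < planck hb c kB \<nu> T2"
proof (cases "T1 > 0")
  case True
  have "hb * \<nu> / (kB * T2) < hb * \<nu> / (kB * T1)"
    using assms True by (intro divide_strict_left_mono) (auto intro: mult_strict_left_mono)
  hence e: "exp (hb * \<nu> / (kB * T2)) < exp (hb * \<nu> / (kB * T1))" by simp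
  have p: "hb * \<nu> / (kB * T2) > 0" using assms by simp
  hence "exp (hb * \<nu> / (kB * T2)) > 1" by simp
  hence d: "0 < c\<^sup>2 * (exp (hb * \<nu> / (kB * T2)) - 1)" using assms by simp
  have "c\<^sup>2 * (exp (hb * \<nu> / (kB * T2)) - 1) < c\<^sup>2 * (exp (hb * \<nu> / (kB * T1)) - 1)"
    using e assms by simp
  moreover have "0 < 2 * hb * \<nu> ^ 3" using assms by simp
  ultimately have "2 * hb * \<nu> ^ 3 / (c\<^sup>2 * (exp (hb * \<nu> / (kB * T1)) - 1))
      < 2 * hb * \<nu> ^ 3 / (c\<^sup>2 * (exp (hb * \<nu> / (kB * T2)) - 1))"
    using d by (intro divide_strict_left_mono) auto
  thus ?thesis using True assms unfolding planck_def by simp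
next
  case False
  have "hb * \<nu> / (kB * T2) > 0" using assms by simp
  hence "exp (hb * \<nu> / (kB * T2)) > 1" by simp
  thus ?thesis using assms False unfolding planck_def by simp
qed

lemma planck_mono:
  assumes "hb > 0" "c > 0" "kB > 0" "\<nu> > 0" "T1 \<le> T2"
  shows "planck hb c kB \<nu> T1 \<le> planck hb c kB \<nu> T2"
proof (cases "T1 = T2")
  case False
  show ?thesis
  proof (cases "T2 > 0")
    case True thus ?thesis using planck_strict[OF assms(1-4), of T1 T2] assms False by simp
  next
    case False thus ?thesis using assms by (simp add: planck_def)
  qed
qed simp

lemma planck_meas[measurable]: "(\<lambda>(\<nu>,T). planck hb c kB \<nu> T) \<in> borel_measurable (borel \<Otimes>\<^sub>M borel)"
  unfolding planck_def by measurable

lemma ennreal_split_le: "ennreal x \<le> ennreal y + ennreal (x - y)"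
proof (cases "y \<ge> 0")
  case True
  then show ?thesis
    by (cases "x \<ge> y") (auto simp flip: ennreal_plus intro: ennreal_leI order_trans[OF ennreal_leI[of x y]] )
next
  case False
  then show ?thesis
    by (cases "x \<ge> 0") (auto intro!: ennreal_leI simp: ennreal_neg)
qed

lemma ennreal_cancel_diff:
  assumes "0 \<le> y" "ennreal x \<le> ennreal y + L"
  shows "ennreal (x - y) \<le> L"
proof (cases "x \<le> y")
  case True thus ?thesis by (simp add: ennreal_neg)
next
  case False
  hence "ennreal x = ennreal y + ennreal (x - y)" using assms by (simp flip: ennreal_plus)
  with assms have "ennreal y + ennreal (x - y) \<le> ennreal y + L" by simp
  thus ?thesis by (simp add: ennreal_add_left_cancel_le)
qed

lemma ennreal_integral_le:
  fixes f :: "'a \<Rightarrow> real"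
  assumes "integrable M f"
  shows "ennreal (integral\<^sup>L M f) \<le> (\<integral>\<^sup>+ x. ennreal (f x) \<partial>M)"
proof -
  have i: "integrable M (\<lambda>x. max (f x) 0)" using assms by auto
  have "integral\<^sup>L M f \<le> integral\<^sup>L M (\<lambda>x. max (f x) 0)"
    using assms i by (intro integral_mono) auto
  hence "ennreal (integral\<^sup>L M f) \<le> ennreal (integral\<^sup>L M (\<lambda>x. max (f x) 0))" by (rule ennreal_leI)
  also have "\<dots> = (\<integral>\<^sup>+ x. ennreal (max (f x) 0) \<partial>M)"
    using i by (subst nn_integral_eq_integral) auto
  also have "\<dots> = (\<integral>\<^sup>+ x. ennreal (f x) \<partial>M)"
    by (intro nn_integral_cong) (auto simp: max_def ennreal_neg)
  finally show ?thesis .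
qed




abbreviation "M2 \<equiv> (lborel \<Otimes>\<^sub>M lborel :: (real \<times> real) measure)"
abbreviation "M3 \<equiv> (lborel \<Otimes>\<^sub>M (lborel \<Otimes>\<^sub>M lborel) :: (real \<times> real \<times> real) measure)"

lemma sfM2: "sigma_finite_measure M2"
  by (intro sigma_finite_pair_measure) (rule sigma_finite_lborel)+

lemma tonelli3:
  fixes f :: "real \<times> real \<times> real \<Rightarrow> ennreal"
  assumes f[measurable]: "f \<in> borel_measurable M3"
  shows "integral\<^sup>N M3 f = (\<integral>\<^sup>+\<tau>. \<integral>\<^sup>+\<nu>. \<integral>\<^sup>+\<mu>. f (\<tau>, \<mu>, \<nu>) \<partial>lborel \<partial>lborel \<partial>lborel)"
proof -
  have "integral\<^sup>N M3 f = (\<integral>\<^sup>+\<tau>. \<integral>\<^sup>+y. f (\<tau>, y) \<partial>M2 \<partial>lborel)"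
    using sigma_finite_measure.nn_integral_fst[OF sfM2, of f lborel] by simp
  also have "\<dots> = (\<integral>\<^sup>+\<tau>. \<integral>\<^sup>+\<nu>. \<integral>\<^sup>+\<mu>. f (\<tau>, \<mu>, \<nu>) \<partial>lborel \<partial>lborel \<partial>lborel)"
    by (intro nn_integral_cong lborel_pair.nn_integral_snd[symmetric]) simp
  finally show ?thesis .
qed

lemma AE_M3_fst:
  assumes "AE \<tau> in lborel. P \<tau>"
  shows "AE x in M3. P (fst x)"
proof -
  obtain N where N: "N \<in> sets lborel" "emeasure lborel N = 0" "{x\<in>space lborel. \<not> P x} \<subseteq> N"
    using AE_E[OF assms] by metis
  show ?thesis
  proof (rule AE_I[where N="N \<times> UNIV"])
    show "{x \<in> space M3. \<not> P (fst x)} \<subseteq> N \<times> UNIV" using N by auto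
    have "emeasure M3 (N \<times> space M2) = emeasure lborel N * emeasure M2 (space M2)"
      using sigma_finite_measure.emeasure_pair_measure_Times[OF sfM2, where A=N and B="space M2" and N=lborel] N sets.top[of M2]
      by simp
    thus "emeasure M3 (N \<times> UNIV) = 0" using N by (simp add: space_pair_measure)
    show "N \<times> UNIV \<in> sets M3" using N by (metis pair_measureI sets.top space_pair_measure space_borel space_lborel UNIV_Times_UNIV)
  qed
qed

lemma AE_M3_snd:
  assumes "AE y in M2. P y"
  shows "AE x in M3. P (snd x)"
proof -
  obtain N where N: "N \<in> sets M2" "emeasure M2 N = 0" "{x\<in>space M2. \<not> P x} \<subseteq> N"
    using AE_E[OF assms] by metis
  show ?thesis
  proof (rule AE_I[where N="UNIV \<times> N"])
    show "{x \<in> space M3. \<not> P (snd x)} \<subseteq> UNIV \<times> N" using N by (auto simp: space_pair_measure)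
    have "emeasure M3 (space lborel \<times> N) = emeasure lborel (space lborel) * emeasure M2 N"
      using sigma_finite_measure.emeasure_pair_measure_Times[OF sfM2, where A="space lborel" and B=N and N=lborel] N
      by simp
    thus "emeasure M3 (UNIV \<times> N) = 0" using N by simp
    show "UNIV \<times> N \<in> sets M3" using N by (metis pair_measureI sets.top space_borel space_lborel)
  qed
qed

lemma M2_reflect: "distr M2 M2 (\<lambda>(x, y). (- x, y)) = M2"
proof -
  have "distr lborel borel uminus \<Otimes>\<^sub>M distr lborel borel (\<lambda>x::real. x)
       = distr M2 (borel \<Otimes>\<^sub>M borel) (\<lambda>(x, y). (- x, y))"
    by (intro pair_measure_distr) (auto simp: distr_id2 sigma_finite_lborel)
  moreover have "distr lborel borel (\<lambda>x::real. x) = lborel" by (simp add: distr_id2)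
  ultimately have "M2 = distr M2 (borel \<Otimes>\<^sub>M borel) (\<lambda>(x, y). (- x, y))"
    by (simp add: lborel_distr_uminus)
  also have "\<dots> = distr M2 M2 (\<lambda>(x, y). (- x, y))"
    by (intro distr_cong sets_pair_measure_cong) auto
  finally show ?thesis by simp
qed

lemma AE_M2_reflect:
  assumes "AE y in M2. P y"
  shows "AE y in M2. P (- fst y, snd y)"
proof -
  have m: "(\<lambda>(x, y). (- x, y)) \<in> measurable M2 M2" by measurable
  obtain N where N: "N \<in> sets M2" "emeasure M2 N = 0" "{x\<in>space M2. \<not> P x} \<subseteq> N"
    using AE_E[OF assms] by metis
  let ?N = "(\<lambda>(x, y). (- x, y)) -` N \<inter> space M2"
  show ?thesis
  proof (rule AE_I[where N="?N"])
    show "?N \<in> sets M2" using measurable_sets[OF m N(1)] .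
    have "emeasure M2 ?N = emeasure (distr M2 M2 (\<lambda>(x, y). (- x, y))) N"
      using m N by (simp add: emeasure_distr)
    thus "emeasure M2 ?N = 0" using N by (simp add: M2_reflect)
    show "{x \<in> space M2. \<not> P (- fst x, snd x)} \<subseteq> ?N" using N by (auto simp: space_pair_measure)
  qed
qed


lemma AE_pair_fst_gen:
  assumes sf: "sigma_finite_measure M" and ae: "AE x in N. P x"
  shows "AE y in N \<Otimes>\<^sub>M M. P (fst y)"
proof -
  obtain A where A: "A \<in> sets N" "emeasure N A = 0" "{x\<in>space N. \<not> P x} \<subseteq> A"
    using AE_E[OF ae] by metis
  show ?thesis
  proof (rule AE_I[where N="A \<times> space M"])
    show "{x \<in> space (N \<Otimes>\<^sub>M M). \<not> P (fst x)} \<subseteq> A \<times> space M" using A by (auto simp: space_pair_measure)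
    have "emeasure (N \<Otimes>\<^sub>M M) (A \<times> space M) = emeasure N A * emeasure M (space M)"
      using sigma_finite_measure.emeasure_pair_measure_Times[OF sf, where A=A and B="space M" and N=N] A sets.top[of M]
      by simp
    thus "emeasure (N \<Otimes>\<^sub>M M) (A \<times> space M) = 0" using A by simp
    show "A \<times> space M \<in> sets (N \<Otimes>\<^sub>M M)" using A by (simp add: pair_measureI)
  qed
qed




definition dom3 :: "real \<Rightarrow> (real \<times> real \<times> real) set" where "dom3 Z = {0<..<Z} \<times> ({-1<..<1} \<times> {0<..})"

definition Kern :: "real \<Rightarrow> real \<Rightarrow> real \<Rightarrow> real \<Rightarrow> real \<Rightarrow> ennreal" where
  "Kern Z k \<tau> \<mu> t = (if 0 < \<mu> \<and> 0 < t \<and> t \<le> \<tau> then ennreal (exp (- k * (\<tau> - t) / \<mu>) * (k / \<mu>))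
      else if \<mu> < 0 \<and> \<tau> \<le> t \<and> t < Z then ennreal (exp (- k * (t - \<tau>) / \<bar>\<mu>\<bar>) * (k / \<bar>\<mu>\<bar>)) else 0)"

lemma Kern_meas[measurable (raw)]:
  assumes [measurable]: "k \<in> borel_measurable M" "\<tau> \<in> borel_measurable M" "\<mu> \<in> borel_measurable M" "t \<in> borel_measurable M"
  shows "(\<lambda>x. Kern Z (k x) (\<tau> x) (\<mu> x) (t x)) \<in> borel_measurable M"
  unfolding Kern_def by measurable

locale cmp =
  fixes hb c kB Z \<kappa>M :: real
    and \<kappa> a :: "real \<Rightarrow> real"
    and Qp Qm Rp Rm :: "real \<Rightarrow> real \<Rightarrow> real"
    and I I' :: "real \<Rightarrow> real \<Rightarrow> real \<Rightarrow> real"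
    and T T' :: "real \<Rightarrow> real"
  assumes phys: "hb > 0" "c > 0" "kB > 0"
    and Z: "Z > 0"
    and meas: "\<kappa> \<in> borel_measurable borel" "a \<in> borel_measurable borel"
    and kappa: "\<And>\<nu>. \<nu> > 0 \<Longrightarrow> 0 < \<kappa> \<nu> \<and> \<kappa> \<nu> \<le> \<kappa>M"
    and alb: "\<And>\<nu>. \<nu> > 0 \<Longrightarrow> 0 \<le> a \<nu> \<and> a \<nu> < 1"
    and QR: "AE x in lborel \<Otimes>\<^sub>M lborel. x \<in> {0<..<1} \<times> {0<..} \<longrightarrow>
               Qp (fst x) (snd x) \<le> Rp (fst x) (snd x) \<and> Qm (fst x) (snd x) \<le> Rm (fst x) (snd x)"
    and sol: "rte_solution hb c kB Z \<kappa> a Qp Qm I T"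
    and sol': "rte_solution hb c kB Z \<kappa> a Rp Rm I' T'"
begin

definition "Ir \<tau> \<mu> \<nu> = indicator (dom3 Z) (\<tau>, \<mu>, \<nu>) * I \<tau> \<mu> \<nu>"
definition "I'r \<tau> \<mu> \<nu> = indicator (dom3 Z) (\<tau>, \<mu>, \<nu>) * I' \<tau> \<mu> \<nu>"

lemma kM: "\<kappa>M > 0" using kappa[of 1] by auto

lemma Tmeas[measurable]: "T \<in> borel_measurable borel" "T' \<in> borel_measurable borel"
  using sol sol' unfolding rte_solution_def by (auto simp: measurable_lborel1)

lemma kmeas[measurable]: "\<kappa> \<in> borel_measurable borel" "a \<in> borel_measurable borel" using meas by auto

lemma int_Ir: "integrable M3 (\<lambda>(\<tau>, \<mu>, \<nu>). Ir \<tau> \<mu> \<nu>)" "integrable M3 (\<lambda>(\<tau>, \<mu>, \<nu>). I'r \<tau> \<mu> \<nu>)"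
proof -
  have "set_integrable M3 (dom3 Z) (\<lambda>(\<tau>, \<mu>, \<nu>). I \<tau> \<mu> \<nu>)"
       "set_integrable M3 (dom3 Z) (\<lambda>(\<tau>, \<mu>, \<nu>). I' \<tau> \<mu> \<nu>)"
    using sol sol' unfolding rte_solution_def dom3_def by auto
  thus "integrable M3 (\<lambda>(\<tau>, \<mu>, \<nu>). Ir \<tau> \<mu> \<nu>)" "integrable M3 (\<lambda>(\<tau>, \<mu>, \<nu>). I'r \<tau> \<mu> \<nu>)"
    unfolding set_integrable_def Ir_def I'r_def by (auto simp: case_prod_beta')
qed

lemma Ir_meas[measurable]: "(\<lambda>(\<tau>, \<mu>, \<nu>). Ir \<tau> \<mu> \<nu>) \<in> borel_measurable M3"
   "(\<lambda>(\<tau>, \<mu>, \<nu>). I'r \<tau> \<mu> \<nu>) \<in> borel_measurable M3"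
  using int_Ir by auto

lemma Ir_meas2[measurable]: "(\<lambda>x. Ir (fst x) (fst (snd x)) (snd (snd x))) \<in> borel_measurable M3"
   "(\<lambda>x. I'r (fst x) (fst (snd x)) (snd (snd x))) \<in> borel_measurable M3"
  using Ir_meas by (auto simp: case_prod_beta')

lemma Ir_comp[measurable (raw)]:
  assumes "f \<in> borel_measurable M" "g \<in> borel_measurable M" "h \<in> borel_measurable M"
  shows "(\<lambda>x. Ir (f x) (g x) (h x)) \<in> borel_measurable M" "(\<lambda>x. I'r (f x) (g x) (h x)) \<in> borel_measurable M"
proof -
  have p: "(\<lambda>x. (f x, g x, h x)) \<in> M \<rightarrow>\<^sub>M M3" using assms by (auto intro!: measurable_Pair simp: measurable_lborel2)
  show "(\<lambda>x. Ir (f x) (g x) (h x)) \<in> borel_measurable M"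
    using measurable_compose[OF p Ir_meas(1)] by simp
  show "(\<lambda>x. I'r (f x) (g x) (h x)) \<in> borel_measurable M"
    using measurable_compose[OF p Ir_meas(2)] by simp
qed

definition "S \<nu> t = src hb c kB a Ir T \<nu> t"
definition "S' \<nu> t = src hb c kB a I'r T' \<nu> t"

lemma Jmean_meas: "(\<lambda>(\<nu>, t). Jmean Ir \<nu> t) \<in> borel_measurable M2"
     "(\<lambda>(\<nu>, t). Jmean I'r \<nu> t) \<in> borel_measurable M2"
  unfolding Jmean_def set_lebesgue_integral_def
  by measurable

end



lemma ftc_pos:
  assumes k: "k > 0" and m: "m > 0" and tz: "t \<le> Z"
  shows "(\<integral>\<^sup>+\<tau>. ennreal (exp (- k * (\<tau> - t) / m) * (k / m)) * indicator {t..Z} \<tau> \<partial>lborel)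
      = ennreal (1 - exp (- k * (Z - t) / m))"
proof -
  have "(\<integral>\<^sup>+\<tau>. ennreal (exp (- k * (\<tau> - t) / m) * (k / m)) * indicator {t..Z} \<tau> \<partial>lborel)
     = ennreal ((\<lambda>\<tau>. - exp (- k * (\<tau> - t) / m)) Z - (\<lambda>\<tau>. - exp (- k * (\<tau> - t) / m)) t)"
  proof (rule nn_integral_FTC_Icc)
    show "(\<lambda>\<tau>. exp (- k * (\<tau> - t) / m) * (k / m)) \<in> borel_measurable borel" by measurable
    fix x
    show "((\<lambda>\<tau>. - exp (- k * (\<tau> - t) / m)) has_real_derivative exp (- k * (x - t) / m) * (k / m)) (at x)"
      using m by (auto intro!: derivative_eq_intros simp: field_simps)
    show "0 \<le> exp (- k * (x - t) / m) * (k / m)" using k m by simp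
  qed (use tz in auto)
  thus ?thesis by simp
qed

lemma ftc_neg:
  assumes k: "k > 0" and m: "m > 0" and tz: "0 \<le> t"
  shows "(\<integral>\<^sup>+\<tau>. ennreal (exp (- k * (t - \<tau>) / m) * (k / m)) * indicator {0..t} \<tau> \<partial>lborel)
      = ennreal (1 - exp (- k * t / m))"
proof -
  have "(\<integral>\<^sup>+\<tau>. ennreal (exp (- k * (t - \<tau>) / m) * (k / m)) * indicator {0..t} \<tau> \<partial>lborel)
     = ennreal ((\<lambda>\<tau>. exp (- k * (t - \<tau>) / m)) t - (\<lambda>\<tau>. exp (- k * (t - \<tau>) / m)) 0)"
  proof (rule nn_integral_FTC_Icc)
    show "(\<lambda>\<tau>. exp (- k * (t - \<tau>) / m) * (k / m)) \<in> borel_measurable borel" by measurable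
    fix x
    show "((\<lambda>\<tau>. exp (- k * (t - \<tau>) / m)) has_real_derivative exp (- k * (t - x) / m) * (k / m)) (at x)"
      using m by (auto intro!: derivative_eq_intros simp: field_simps)
    show "0 \<le> exp (- k * (t - x) / m) * (k / m)" using k m by simp
  qed (use tz in auto)
  thus ?thesis by simp
qed

lemma inner_bound:
  assumes k: "k > 0" and t: "0 < t" "t < Z"
  shows "(\<integral>\<^sup>+\<tau>. ennreal (k/2) * Kern Z k \<tau> \<mu> t * indicator {0<..<Z} \<tau> * indicator {-1<..<1} \<mu> \<partial>lborel)
     \<le> ennreal (k/2) * (ennreal (1 - exp (- k * (Z - t) / \<mu>)) * indicator {0<..<1} \<mu> + indicator {-1<..<0} \<mu>)"
proof (cases "0 < \<mu> \<and> \<mu> < 1")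
  case True
  have "(\<integral>\<^sup>+\<tau>. ennreal (k/2) * Kern Z k \<tau> \<mu> t * indicator {0<..<Z} \<tau> * indicator {-1<..<1} \<mu> \<partial>lborel)
     \<le> (\<integral>\<^sup>+\<tau>. ennreal (k/2) * (ennreal (exp (- k * (\<tau> - t) / \<mu>) * (k / \<mu>)) * indicator {t..Z} \<tau>) \<partial>lborel)"
    using True t by (intro nn_integral_mono) (auto simp: Kern_def indicator_def)
  also have "\<dots> = ennreal (k/2) * ennreal (1 - exp (- k * (Z - t) / \<mu>))"
    using True t k ftc_pos[OF k, of \<mu> t Z] by (subst nn_integral_cmult) auto
  finally show ?thesis using True by (simp add: indicator_def)
next
  case F: False
  show ?thesis
  proof (cases "-1 < \<mu> \<and> \<mu> < 0")
    case True
    have "(\<integral>\<^sup>+\<tau>. ennreal (k/2) * Kern Z k \<tau> \<mu> t * indicator {0<..<Z} \<tau> * indicator {-1<..<1} \<mu> \<partial>lborel)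
       \<le> (\<integral>\<^sup>+\<tau>. ennreal (k/2) * (ennreal (exp (- k * (t - \<tau>) / \<bar>\<mu>\<bar>) * (k / \<bar>\<mu>\<bar>)) * indicator {0..t} \<tau>) \<partial>lborel)"
      using True t by (intro nn_integral_mono) (auto simp: Kern_def indicator_def)
    also have "\<dots> = ennreal (k/2) * ennreal (1 - exp (- k * t / \<bar>\<mu>\<bar>))"
      using True t k ftc_neg[OF k, of "\<bar>\<mu>\<bar>" t] by (subst nn_integral_cmult) auto
    also have "\<dots> \<le> ennreal (k/2) * 1"
      using k t True by (intro mult_left_mono) (auto simp: ennreal_le_1)
    finally show ?thesis using True by (simp add: indicator_def)
  next
    case False
    have "\<And>\<tau>. ennreal (k/2) * Kern Z k \<tau> \<mu> t * indicator {0<..<Z} \<tau> * indicator {-1<..<1} \<mu> = 0"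
      using False F by (auto simp: indicator_def Kern_def)
    hence "(\<integral>\<^sup>+\<tau>. ennreal (k/2) * Kern Z k \<tau> \<mu> t * indicator {0<..<Z} \<tau> * indicator {-1<..<1} \<mu> \<partial>lborel) = (\<integral>\<^sup>+(\<tau>::real). 0 \<partial>lborel)"
      by (simp only:)
    thus ?thesis by simp
  qed
qed

definition Ek :: "real \<Rightarrow> real \<Rightarrow> real \<Rightarrow> ennreal" where
  "Ek Z k t = ennreal (k/2) * (\<integral>\<^sup>+\<mu>. ennreal (exp (- k * (Z - t) / \<mu>)) * indicator {0<..<1} \<mu> \<partial>lborel)"

lemma kernel_bound:
  assumes k: "k > 0" and t: "0 < t" "t < Z"
  shows "(\<integral>\<^sup>+\<tau>. \<integral>\<^sup>+\<mu>. ennreal (k/2) * Kern Z k \<tau> \<mu> t * indicator {0<..<Z} \<tau> * indicator {-1<..<1} \<mu> \<partial>lborel \<partial>lborel)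
          + Ek Z k t \<le> ennreal k"
proof -
  let ?e = "\<lambda>\<mu>. exp (- k * (Z - t) / \<mu>)"
  have "(\<integral>\<^sup>+\<tau>. \<integral>\<^sup>+\<mu>. ennreal (k/2) * Kern Z k \<tau> \<mu> t * indicator {0<..<Z} \<tau> * indicator {-1<..<1} \<mu> \<partial>lborel \<partial>lborel)
     = (\<integral>\<^sup>+\<mu>. \<integral>\<^sup>+\<tau>. ennreal (k/2) * Kern Z k \<tau> \<mu> t * indicator {0<..<Z} \<tau> * indicator {-1<..<1} \<mu> \<partial>lborel \<partial>lborel)"
    by (rule lborel_pair.Fubini'[symmetric]) measurable
  also have "\<dots> \<le> (\<integral>\<^sup>+\<mu>. ennreal (k/2) * (ennreal (1 - ?e \<mu>) * indicator {0<..<1} \<mu> + indicator {-1<..<0} \<mu>) \<partial>lborel)"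
    by (intro nn_integral_mono inner_bound k t)
  also have "\<dots> = ennreal (k/2) * ((\<integral>\<^sup>+\<mu>. ennreal (1 - ?e \<mu>) * indicator {0<..<1} \<mu> \<partial>lborel) + 1)"
    by (subst nn_integral_cmult) (auto simp: nn_integral_add)
  finally have 1: "(\<integral>\<^sup>+\<tau>. \<integral>\<^sup>+\<mu>. ennreal (k/2) * Kern Z k \<tau> \<mu> t * indicator {0<..<Z} \<tau> * indicator {-1<..<1} \<mu> \<partial>lborel \<partial>lborel)
    \<le> ennreal (k/2) * ((\<integral>\<^sup>+\<mu>. ennreal (1 - ?e \<mu>) * indicator {0<..<1} \<mu> \<partial>lborel) + 1)" .
  have "(\<integral>\<^sup>+\<mu>. ennreal (1 - ?e \<mu>) * indicator {0<..<1} \<mu> \<partial>lborel) + (\<integral>\<^sup>+\<mu>. ennreal (?e \<mu>) * indicator {0<..<1} \<mu> \<partial>lborel)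
      = (\<integral>\<^sup>+\<mu>. ennreal (1 - ?e \<mu>) * indicator {0<..<1} \<mu> + ennreal (?e \<mu>) * indicator {0<..<1} \<mu> \<partial>lborel)"
    by (rule nn_integral_add[symmetric]) auto
  also have "\<dots> = (\<integral>\<^sup>+(\<mu>::real). indicator {0<..<1} \<mu> \<partial>lborel)"
  proof (intro nn_integral_cong)
    fix \<mu> :: real
    show "ennreal (1 - ?e \<mu>) * indicator {0<..<1} \<mu> + ennreal (?e \<mu>) * indicator {0<..<1} \<mu> = indicator {0<..<1} \<mu>"
    proof (cases "0 < \<mu> \<and> \<mu> < 1")
      case True
      have "?e \<mu> \<le> 1" using True k t by (simp add: divide_nonneg_pos)
      hence "ennreal (1 - ?e \<mu>) + ennreal (?e \<mu>) = 1" by (simp flip: ennreal_plus)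
      thus ?thesis using True by simp
    qed auto
  qed
  also have "\<dots> = 1" by simp
  finally have 2: "(\<integral>\<^sup>+\<mu>. ennreal (1 - ?e \<mu>) * indicator {0<..<1} \<mu> \<partial>lborel) + (\<integral>\<^sup>+\<mu>. ennreal (?e \<mu>) * indicator {0<..<1} \<mu> \<partial>lborel) = 1" .
  have "(\<integral>\<^sup>+\<tau>. \<integral>\<^sup>+\<mu>. ennreal (k/2) * Kern Z k \<tau> \<mu> t * indicator {0<..<Z} \<tau> * indicator {-1<..<1} \<mu> \<partial>lborel \<partial>lborel)
          + Ek Z k t \<le> ennreal (k/2) * ((\<integral>\<^sup>+\<mu>. ennreal (1 - ?e \<mu>) * indicator {0<..<1} \<mu> \<partial>lborel) + 1) + Ek Z k t"
    using 1 by (rule add_right_mono)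
  also have "\<dots> = ennreal (k/2) * (((\<integral>\<^sup>+\<mu>. ennreal (1 - ?e \<mu>) * indicator {0<..<1} \<mu> \<partial>lborel) + (\<integral>\<^sup>+\<mu>. ennreal (?e \<mu>) * indicator {0<..<1} \<mu> \<partial>lborel)) + 1)"
    unfolding Ek_def by (simp add: distrib_left add_ac)
  also have "\<dots> = ennreal (k/2) * ennreal 2" using 2 by simp
  also have "\<dots> = ennreal (k/2 * 2)" using k by (subst ennreal_mult) auto
  also have "\<dots> = ennreal k" by simp
  finally show ?thesis .
qed

lemma Ek_pos:
  assumes k: "k > 0" and t: "t < Z"
  shows "Ek Z k t \<noteq> 0"
proof -
  let ?c = "exp (- 2 * k * (Z - t))"
  have "(\<integral>\<^sup>+(\<mu>::real). ennreal ?c * indicator {1/2<..<1} \<mu> \<partial>lborel) \<le> (\<integral>\<^sup>+\<mu>. ennreal (exp (- k * (Z - t) / \<mu>)) * indicator {0<..<1} \<mu> \<partial>lborel)"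
  proof (intro nn_integral_mono)
    fix \<mu> :: real
    show "ennreal ?c * indicator {1/2<..<1} \<mu> \<le> ennreal (exp (- k * (Z - t) / \<mu>)) * indicator {0<..<1} \<mu>"
    proof (cases "1/2 < \<mu> \<and> \<mu> < 1")
      case True
      have "k * (Z - t) / \<mu> \<le> k * (Z - t) / (1/2)"
        using True k t by (intro divide_left_mono) auto
      hence "?c \<le> exp (- k * (Z - t) / \<mu>)" by simp
      thus ?thesis using True by (simp add: ennreal_leI)
    qed auto
  qed
  moreover have "(\<integral>\<^sup>+(\<mu>::real). ennreal ?c * indicator {1/2<..<1} \<mu> \<partial>lborel) = ennreal ?c * ennreal (1/2)"
    by (simp add: nn_integral_cmult_indicator)
  moreover have "ennreal ?c * ennreal (1/2) > 0" by (subst ennreal_mult[symmetric]) auto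
  ultimately have "(\<integral>\<^sup>+\<mu>. ennreal (exp (- k * (Z - t) / \<mu>)) * indicator {0<..<1} \<mu> \<partial>lborel) > 0" by auto
  thus ?thesis unfolding Ek_def using k by simp
qed

lemma stepD:
  assumes k: "k > 0" and g[measurable]: "g \<in> borel_measurable borel"
  shows "(\<integral>\<^sup>+\<tau>. \<integral>\<^sup>+\<mu>. ennreal (k/2) * (\<integral>\<^sup>+t. Kern Z k \<tau> \<mu> t * g t \<partial>lborel) * indicator {0<..<Z} \<tau> * indicator {-1<..<1} \<mu> \<partial>lborel \<partial>lborel)
       + (\<integral>\<^sup>+\<tau>. g \<tau> * indicator {0<..<Z} \<tau> * Ek Z k \<tau> \<partial>lborel)
       \<le> (\<integral>\<^sup>+\<tau>. ennreal k * g \<tau> * indicator {0<..<Z} \<tau> \<partial>lborel)"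
proof -
  let ?F = "\<lambda>\<tau> \<mu> t. ennreal (k/2) * Kern Z k \<tau> \<mu> t * indicator {0<..<Z} \<tau> * indicator {-1<..<1} \<mu>"
  let ?Q = "\<lambda>t. \<integral>\<^sup>+\<tau>. \<integral>\<^sup>+\<mu>. ?F \<tau> \<mu> t \<partial>lborel \<partial>lborel"
  have "(\<integral>\<^sup>+\<tau>. \<integral>\<^sup>+\<mu>. ennreal (k/2) * (\<integral>\<^sup>+t. Kern Z k \<tau> \<mu> t * g t \<partial>lborel) * indicator {0<..<Z} \<tau> * indicator {-1<..<1} \<mu> \<partial>lborel \<partial>lborel)
     = (\<integral>\<^sup>+\<tau>. \<integral>\<^sup>+\<mu>. \<integral>\<^sup>+t. ?F \<tau> \<mu> t * g t \<partial>lborel \<partial>lborel \<partial>lborel)"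
    by (intro nn_integral_cong) (simp add: nn_integral_cmult nn_integral_multc flip: nn_integral_cmult nn_integral_multc ; simp add: ac_simps)
  also have "\<dots> = (\<integral>\<^sup>+\<tau>. \<integral>\<^sup>+t. \<integral>\<^sup>+\<mu>. ?F \<tau> \<mu> t * g t \<partial>lborel \<partial>lborel \<partial>lborel)"
    by (intro nn_integral_cong lborel_pair.Fubini') measurable
  also have "\<dots> = (\<integral>\<^sup>+t. \<integral>\<^sup>+\<tau>. \<integral>\<^sup>+\<mu>. ?F \<tau> \<mu> t * g t \<partial>lborel \<partial>lborel \<partial>lborel)"
    by (rule lborel_pair.Fubini') measurable
  also have "\<dots> = (\<integral>\<^sup>+t. g t * indicator {0<..<Z} t * ?Q t \<partial>lborel)"
  proof (intro nn_integral_cong)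
    fix t :: real
    show "(\<integral>\<^sup>+\<tau>. \<integral>\<^sup>+\<mu>. ?F \<tau> \<mu> t * g t \<partial>lborel \<partial>lborel) = g t * indicator {0<..<Z} t * ?Q t"
    proof (cases "0 < t \<and> t < Z")
      case True
      have "g t * ?Q t = (\<integral>\<^sup>+\<tau>. \<integral>\<^sup>+\<mu>. g t * ?F \<tau> \<mu> t \<partial>lborel \<partial>lborel)"
        apply (subst nn_integral_cmult[symmetric])
         apply measurable
        apply (intro nn_integral_cong)
        apply (subst nn_integral_cmult[symmetric])
         apply measurable
        done
      thus ?thesis using True by (simp add: ac_simps)
    next
      case False
      have "\<And>\<tau> \<mu>. ?F \<tau> \<mu> t * g t = 0" using False by (auto simp: Kern_def indicator_def)
      hence "(\<integral>\<^sup>+\<tau>. \<integral>\<^sup>+\<mu>. ?F \<tau> \<mu> t * g t \<partial>lborel \<partial>lborel) = (\<integral>\<^sup>+(\<tau>::real). \<integral>\<^sup>+(\<mu>::real). 0 \<partial>lborel \<partial>lborel)"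
        by (simp only:)
      thus ?thesis using False by simp
    qed
  qed
  finally have 1: "(\<integral>\<^sup>+\<tau>. \<integral>\<^sup>+\<mu>. ennreal (k/2) * (\<integral>\<^sup>+t. Kern Z k \<tau> \<mu> t * g t \<partial>lborel) * indicator {0<..<Z} \<tau> * indicator {-1<..<1} \<mu> \<partial>lborel \<partial>lborel)
     = (\<integral>\<^sup>+t. g t * indicator {0<..<Z} t * ?Q t \<partial>lborel)" .
  have "(\<integral>\<^sup>+t. g t * indicator {0<..<Z} t * ?Q t \<partial>lborel) + (\<integral>\<^sup>+\<tau>. g \<tau> * indicator {0<..<Z} \<tau> * Ek Z k \<tau> \<partial>lborel)
     = (\<integral>\<^sup>+t. g t * indicator {0<..<Z} t * (?Q t + Ek Z k t) \<partial>lborel)"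
    unfolding Ek_def by (subst nn_integral_add[symmetric]) (auto simp: distrib_left)
  also have "\<dots> \<le> (\<integral>\<^sup>+t. g t * indicator {0<..<Z} t * ennreal k \<partial>lborel)"
  proof (intro nn_integral_mono)
    fix t :: real
    show "g t * indicator {0<..<Z} t * (?Q t + Ek Z k t) \<le> g t * indicator {0<..<Z} t * ennreal k"
      using kernel_bound[OF k, of t Z] by (cases "0 < t \<and> t < Z") (auto intro!: mult_left_mono)
  qed
  finally show ?thesis using 1 by (simp add: ac_simps)
qed




context cmp begin

definition "g \<nu> t = ennreal (S \<nu> t - S' \<nu> t)"
definition "Lg \<tau> \<mu> \<nu> = (\<integral>\<^sup>+t. Kern Z (\<kappa> \<nu>) \<tau> \<mu> t * g \<nu> t \<partial>lborel)"
definition "P \<tau> \<mu> \<nu> = ennreal (\<kappa> \<nu> / 2) * ennreal (Ir \<tau> \<mu> \<nu> - I'r \<tau> \<mu> \<nu>) * indicator (dom3 Z) (\<tau>, \<mu>, \<nu>)"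
definition "H \<tau> \<mu> \<nu> = ennreal (\<kappa> \<nu> / 2) * Lg \<tau> \<mu> \<nu> * indicator {0<..<Z} \<tau> * indicator {-1<..<1} \<mu> * indicator {0<..} \<nu>"
definition "G \<nu> t = ennreal (\<kappa> \<nu>) * g \<nu> t * indicator {0<..<Z} t * indicator {0<..} \<nu>"
definition "Wf \<nu> t = g \<nu> t * indicator {0<..<Z} t * Ek Z (\<kappa> \<nu>) t * indicator {0<..} \<nu>"

lemma S_meas[measurable]: "(\<lambda>(\<nu>, t). S \<nu> t) \<in> borel_measurable M2" "(\<lambda>(\<nu>, t). S' \<nu> t) \<in> borel_measurable M2"
proof -
  have [measurable]: "(\<lambda>(\<nu>, t). Jmean Ir \<nu> t) \<in> borel_measurable M2" "(\<lambda>(\<nu>, t). Jmean I'r \<nu> t) \<in> borel_measurable M2"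
    using Jmean_meas by auto
  have [measurable]: "(\<lambda>x. planck hb c kB (fst x) (T (snd x))) \<in> borel_measurable M2"
     "(\<lambda>x. planck hb c kB (fst x) (T' (snd x))) \<in> borel_measurable M2"
    using measurable_compose[OF _ planck_meas, of "\<lambda>x. (fst x, T (snd x))" M2]
          measurable_compose[OF _ planck_meas, of "\<lambda>x. (fst x, T' (snd x))" M2]
    by (auto simp: measurable_lborel2)
  show "(\<lambda>(\<nu>, t). S \<nu> t) \<in> borel_measurable M2" "(\<lambda>(\<nu>, t). S' \<nu> t) \<in> borel_measurable M2"
    unfolding S_def S'_def src_def case_prod_beta' by measurable
qed

lemma S_comp[measurable (raw)]:
  assumes "f \<in> borel_measurable M" "h \<in> borel_measurable M"
  shows "(\<lambda>x. S (f x) (h x)) \<in> borel_measurable M" "(\<lambda>x. S' (f x) (h x)) \<in> borel_measurable M"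
proof -
  have p: "(\<lambda>x. (f x, h x)) \<in> M \<rightarrow>\<^sub>M M2" using assms by (auto intro!: measurable_Pair simp: measurable_lborel2)
  show "(\<lambda>x. S (f x) (h x)) \<in> borel_measurable M"
    using measurable_compose[OF p S_meas(1)] by simp
  show "(\<lambda>x. S' (f x) (h x)) \<in> borel_measurable M"
    using measurable_compose[OF p S_meas(2)] by simp
qed

lemma kappa_comp[measurable (raw)]: "f \<in> borel_measurable M \<Longrightarrow> (\<lambda>x. \<kappa> (f x)) \<in> borel_measurable M"
  "f \<in> borel_measurable M \<Longrightarrow> (\<lambda>x. a (f x)) \<in> borel_measurable M"
  using measurable_compose[OF _ kmeas(1)] measurable_compose[OF _ kmeas(2)] by auto

lemma g_comp[measurable (raw)]:
  assumes "f \<in> borel_measurable M" "h \<in> borel_measurable M"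
  shows "(\<lambda>x. g (f x) (h x)) \<in> borel_measurable M"
  unfolding g_def using assms by measurable

lemma Lg_meas: "(\<lambda>x. Lg (fst x) (fst (snd x)) (snd (snd x))) \<in> borel_measurable M3"
  unfolding Lg_def by measurable

lemma Lg_comp[measurable (raw)]:
  assumes "f \<in> borel_measurable M" "f2 \<in> borel_measurable M" "h \<in> borel_measurable M"
  shows "(\<lambda>x. Lg (f x) (f2 x) (h x)) \<in> borel_measurable M"
proof -
  have p: "(\<lambda>x. (f x, f2 x, h x)) \<in> M \<rightarrow>\<^sub>M M3" using assms by (auto intro!: measurable_Pair simp: measurable_lborel2)
  show ?thesis using measurable_compose[OF p Lg_meas] by simp
qed

end



context cmp begin

lemma Jmean_eq: "t \<in> {0<..<Z} \<Longrightarrow> \<nu> > 0 \<Longrightarrow> Jmean I \<nu> t = Jmean Ir \<nu> t"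
  "t \<in> {0<..<Z} \<Longrightarrow> \<nu> > 0 \<Longrightarrow> Jmean I' \<nu> t = Jmean I'r \<nu> t"
  unfolding Jmean_def Ir_def I'r_def
  by (auto intro!: set_lebesgue_integral_cong simp: dom3_def)

lemma src_eq: "t \<in> {0<..<Z} \<Longrightarrow> \<nu> > 0 \<Longrightarrow> src hb c kB a I T \<nu> t = S \<nu> t"
  "t \<in> {0<..<Z} \<Longrightarrow> \<nu> > 0 \<Longrightarrow> src hb c kB a I' T' \<nu> t = S' \<nu> t"
  unfolding S_def S'_def src_def using Jmean_eq by auto

lemma split_int:
  assumes w: "\<And>t. 0 \<le> w t" and wm[measurable]: "w \<in> borel_measurable borel"
    and K: "\<And>t. t \<in> A \<Longrightarrow> Kern Z (\<kappa> \<nu>) \<tau> \<mu> t = ennreal (w t)"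
    and A[measurable]: "A \<in> sets borel" and AZ: "A \<subseteq> {0<..<Z}"
  shows "(\<integral>\<^sup>+t. ennreal (w t * S \<nu> t) * indicator A t \<partial>lborel)
    \<le> (\<integral>\<^sup>+t. ennreal (w t * S' \<nu> t) * indicator A t \<partial>lborel) + Lg \<tau> \<mu> \<nu>"
proof -
  have "(\<integral>\<^sup>+t. ennreal (w t * S \<nu> t) * indicator A t \<partial>lborel)
    \<le> (\<integral>\<^sup>+t. ennreal (w t * S' \<nu> t) * indicator A t + Kern Z (\<kappa> \<nu>) \<tau> \<mu> t * g \<nu> t \<partial>lborel)"
  proof (intro nn_integral_mono)
    fix t
    show "ennreal (w t * S \<nu> t) * indicator A t \<le> ennreal (w t * S' \<nu> t) * indicator A t + Kern Z (\<kappa> \<nu>) \<tau> \<mu> t * g \<nu> t"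
    proof (cases "t \<in> A")
      case True
      have "ennreal (w t * S \<nu> t) \<le> ennreal (w t * S' \<nu> t) + ennreal (w t * S \<nu> t - w t * S' \<nu> t)"
        by (rule ennreal_split_le)
      also have "ennreal (w t * S \<nu> t - w t * S' \<nu> t) = ennreal (w t) * g \<nu> t"
        unfolding g_def using w[of t] by (simp add: ennreal_mult'[symmetric] right_diff_distrib)
      finally show ?thesis using True K by simp
    qed simp
  qed
  also have "\<dots> = (\<integral>\<^sup>+t. ennreal (w t * S' \<nu> t) * indicator A t \<partial>lborel) + Lg \<tau> \<mu> \<nu>"
    unfolding Lg_def by (rule nn_integral_add) measurable
  finally show ?thesis .
qed

lemma P_le_H_aux:
  assumes x: "\<tau> \<in> {0<..<Z}" "\<mu> \<in> {-1<..<1}" "\<nu> > 0"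
    and le: "ennreal (I \<tau> \<mu> \<nu>) \<le> ennreal (I' \<tau> \<mu> \<nu>) + Lg \<tau> \<mu> \<nu>"
    and nn: "I' \<tau> \<mu> \<nu> \<ge> 0"
  shows "P \<tau> \<mu> \<nu> \<le> H \<tau> \<mu> \<nu>"
proof -
  have "ennreal (I \<tau> \<mu> \<nu> - I' \<tau> \<mu> \<nu>) \<le> Lg \<tau> \<mu> \<nu>" using ennreal_cancel_diff[OF nn le] .
  moreover have "(\<tau>, \<mu>, \<nu>) \<in> dom3 Z" using x by (auto simp: dom3_def)
  ultimately show ?thesis using x unfolding P_def H_def Ir_def I'r_def
    by (auto intro!: mult_left_mono)
qed

lemma stepA_pos:
  assumes x: "\<tau> \<in> {0<..<Z}" "0 < \<mu>" "\<mu> < 1" "\<nu> > 0"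
    and eqI: "ennreal (I \<tau> \<mu> \<nu>) = ennreal (exp (- \<kappa> \<nu> * \<tau> / \<mu>) * Qp \<mu> \<nu>)
           + (\<integral>\<^sup>+ t. ennreal (exp (- \<kappa> \<nu> * (\<tau> - t) / \<mu>) * (\<kappa> \<nu> / \<mu>)
                          * src hb c kB a I T \<nu> t) * indicator {0..\<tau>} t \<partial>lborel)"
    and eqI': "ennreal (I' \<tau> \<mu> \<nu>) = ennreal (exp (- \<kappa> \<nu> * \<tau> / \<mu>) * Rp \<mu> \<nu>)
           + (\<integral>\<^sup>+ t. ennreal (exp (- \<kappa> \<nu> * (\<tau> - t) / \<mu>) * (\<kappa> \<nu> / \<mu>)
                          * src hb c kB a I' T' \<nu> t) * indicator {0..\<tau>} t \<partial>lborel)"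
    and nn: "I' \<tau> \<mu> \<nu> \<ge> 0" and q: "Qp \<mu> \<nu> \<le> Rp \<mu> \<nu>"
  shows "P \<tau> \<mu> \<nu> \<le> H \<tau> \<mu> \<nu>"
proof -
  define w where "w t = exp (- \<kappa> \<nu> * (\<tau> - t) / \<mu>) * (\<kappa> \<nu> / \<mu>)" for t
  have w0: "0 \<le> w t" for t unfolding w_def using kappa[OF x(4)] x by simp
  have wm: "w \<in> borel_measurable borel" unfolding w_def by measurable
  have AZ: "{0<..\<tau>} \<subseteq> {0<..<Z}" using x by auto
  have e1: "(\<integral>\<^sup>+ t. ennreal (exp (- \<kappa> \<nu> * (\<tau> - t) / \<mu>) * (\<kappa> \<nu> / \<mu>) * src hb c kB a I T \<nu> t) * indicator {0..\<tau>} t \<partial>lborel)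
      = (\<integral>\<^sup>+t. ennreal (w t * S \<nu> t) * indicator {0<..\<tau>} t \<partial>lborel)"
    using AE_lborel_singleton[of 0] AZ x
    by (intro nn_integral_cong_AE) (auto elim!: eventually_mono simp: w_def src_eq indicator_def subset_eq)
  have e2: "(\<integral>\<^sup>+ t. ennreal (exp (- \<kappa> \<nu> * (\<tau> - t) / \<mu>) * (\<kappa> \<nu> / \<mu>) * src hb c kB a I' T' \<nu> t) * indicator {0..\<tau>} t \<partial>lborel)
      = (\<integral>\<^sup>+t. ennreal (w t * S' \<nu> t) * indicator {0<..\<tau>} t \<partial>lborel)"
    using AE_lborel_singleton[of 0] AZ x
    by (intro nn_integral_cong_AE) (auto elim!: eventually_mono simp: w_def src_eq indicator_def subset_eq)
  have K: "Kern Z (\<kappa> \<nu>) \<tau> \<mu> t = ennreal (w t)" if "t \<in> {0<..\<tau>}" for t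
    using that x unfolding Kern_def w_def by auto
  have si: "(\<integral>\<^sup>+t. ennreal (w t * S \<nu> t) * indicator {0<..\<tau>} t \<partial>lborel)
    \<le> (\<integral>\<^sup>+t. ennreal (w t * S' \<nu> t) * indicator {0<..\<tau>} t \<partial>lborel) + Lg \<tau> \<mu> \<nu>"
    by (rule split_int[OF w0 wm K _ AZ]) auto
  have "ennreal (exp (- \<kappa> \<nu> * \<tau> / \<mu>) * Qp \<mu> \<nu>) \<le> ennreal (exp (- \<kappa> \<nu> * \<tau> / \<mu>) * Rp \<mu> \<nu>)"
    using q by (intro ennreal_leI mult_left_mono) auto
  hence "ennreal (I \<tau> \<mu> \<nu>) \<le> ennreal (I' \<tau> \<mu> \<nu>) + Lg \<tau> \<mu> \<nu>"
    unfolding eqI eqI' e1 e2 using si by (metis (no_types, lifting) add.assoc add_mono)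
  thus ?thesis using P_le_H_aux[of \<tau> \<mu> \<nu>] x nn by auto
qed

lemma stepA_neg:
  assumes x: "\<tau> \<in> {0<..<Z}" "-1 < \<mu>" "\<mu> < 0" "\<nu> > 0"
    and eqI: "ennreal (I \<tau> \<mu> \<nu>) = ennreal (exp (- \<kappa> \<nu> * (Z - \<tau>) / \<bar>\<mu>\<bar>) * Qm \<bar>\<mu>\<bar> \<nu>)
           + (\<integral>\<^sup>+ t. ennreal (exp (- \<kappa> \<nu> * (t - \<tau>) / \<bar>\<mu>\<bar>) * (\<kappa> \<nu> / \<bar>\<mu>\<bar>)
                          * src hb c kB a I T \<nu> t) * indicator {\<tau>..Z} t \<partial>lborel)"
    and eqI': "ennreal (I' \<tau> \<mu> \<nu>) = ennreal (exp (- \<kappa> \<nu> * (Z - \<tau>) / \<bar>\<mu>\<bar>) * Rm \<bar>\<mu>\<bar> \<nu>)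
           + (\<integral>\<^sup>+ t. ennreal (exp (- \<kappa> \<nu> * (t - \<tau>) / \<bar>\<mu>\<bar>) * (\<kappa> \<nu> / \<bar>\<mu>\<bar>)
                          * src hb c kB a I' T' \<nu> t) * indicator {\<tau>..Z} t \<partial>lborel)"
    and nn: "I' \<tau> \<mu> \<nu> \<ge> 0" and q: "Qm \<bar>\<mu>\<bar> \<nu> \<le> Rm \<bar>\<mu>\<bar> \<nu>"
  shows "P \<tau> \<mu> \<nu> \<le> H \<tau> \<mu> \<nu>"
proof -
  define w where "w t = exp (- \<kappa> \<nu> * (t - \<tau>) / \<bar>\<mu>\<bar>) * (\<kappa> \<nu> / \<bar>\<mu>\<bar>)" for t
  have w0: "0 \<le> w t" for t unfolding w_def using kappa[OF x(4)] x by (intro mult_nonneg_nonneg divide_nonneg_nonneg) auto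
  have wm: "w \<in> borel_measurable borel" unfolding w_def by measurable
  have AZ: "{\<tau>..<Z} \<subseteq> {0<..<Z}" using x by auto
  have e1: "(\<integral>\<^sup>+ t. ennreal (exp (- \<kappa> \<nu> * (t - \<tau>) / \<bar>\<mu>\<bar>) * (\<kappa> \<nu> / \<bar>\<mu>\<bar>) * src hb c kB a I T \<nu> t) * indicator {\<tau>..Z} t \<partial>lborel)
      = (\<integral>\<^sup>+t. ennreal (w t * S \<nu> t) * indicator {\<tau>..<Z} t \<partial>lborel)"
    using AE_lborel_singleton[of Z] AZ x
    by (intro nn_integral_cong_AE) (auto elim!: eventually_mono simp: w_def src_eq indicator_def subset_eq)
  have e2: "(\<integral>\<^sup>+ t. ennreal (exp (- \<kappa> \<nu> * (t - \<tau>) / \<bar>\<mu>\<bar>) * (\<kappa> \<nu> / \<bar>\<mu>\<bar>) * src hb c kB a I' T' \<nu> t) * indicator {\<tau>..Z} t \<partial>lborel)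
      = (\<integral>\<^sup>+t. ennreal (w t * S' \<nu> t) * indicator {\<tau>..<Z} t \<partial>lborel)"
    using AE_lborel_singleton[of Z] AZ x
    by (intro nn_integral_cong_AE) (auto elim!: eventually_mono simp: w_def src_eq indicator_def subset_eq)
  have K: "Kern Z (\<kappa> \<nu>) \<tau> \<mu> t = ennreal (w t)" if "t \<in> {\<tau>..<Z}" for t
    using that x unfolding Kern_def w_def by auto
  have si: "(\<integral>\<^sup>+t. ennreal (w t * S \<nu> t) * indicator {\<tau>..<Z} t \<partial>lborel)
    \<le> (\<integral>\<^sup>+t. ennreal (w t * S' \<nu> t) * indicator {\<tau>..<Z} t \<partial>lborel) + Lg \<tau> \<mu> \<nu>"
    by (rule split_int[OF w0 wm K _ AZ]) auto
  have "ennreal (exp (- \<kappa> \<nu> * (Z - \<tau>) / \<bar>\<mu>\<bar>) * Qm \<bar>\<mu>\<bar> \<nu>) \<le> ennreal (exp (- \<kappa> \<nu> * (Z - \<tau>) / \<bar>\<mu>\<bar>) * Rm \<bar>\<mu>\<bar> \<nu>)"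
    using q by (intro ennreal_leI mult_left_mono) auto
  hence "ennreal (I \<tau> \<mu> \<nu>) \<le> ennreal (I' \<tau> \<mu> \<nu>) + Lg \<tau> \<mu> \<nu>"
    unfolding eqI eqI' e1 e2 using si by (metis (no_types, lifting) add.assoc add_mono)
  thus ?thesis using P_le_H_aux[of \<tau> \<mu> \<nu>] x nn by auto
qed

lemma P_meas[measurable]: "(\<lambda>x. P (fst x) (fst (snd x)) (snd (snd x))) \<in> borel_measurable M3"
  unfolding P_def dom3_def by measurable

lemma H_meas[measurable]: "(\<lambda>x. H (fst x) (fst (snd x)) (snd (snd x))) \<in> borel_measurable M3"
  unfolding H_def by measurable

lemma stepA: "AE x in M3. P (fst x) (fst (snd x)) (snd (snd x)) \<le> H (fst x) (fst (snd x)) (snd (snd x))"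
proof -
  have mild: "AE x in M3. let \<tau> = fst x; \<mu> = fst (snd x); \<nu> = snd (snd x) in
        (\<tau> \<in> {0<..<Z} \<and> \<mu> \<in> {0<..<1} \<and> \<nu> > 0 \<longrightarrow>
           ennreal (I \<tau> \<mu> \<nu>) =
             ennreal (exp (- \<kappa> \<nu> * \<tau> / \<mu>) * Qp \<mu> \<nu>)
           + (\<integral>\<^sup>+ t. ennreal (exp (- \<kappa> \<nu> * (\<tau> - t) / \<mu>) * (\<kappa> \<nu> / \<mu>)
                          * src hb c kB a I T \<nu> t) * indicator {0..\<tau>} t \<partial>lborel))
      \<and> (\<tau> \<in> {0<..<Z} \<and> \<mu> \<in> {-1<..<0} \<and> \<nu> > 0 \<longrightarrow>
           ennreal (I \<tau> \<mu> \<nu>) =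
             ennreal (exp (- \<kappa> \<nu> * (Z - \<tau>) / \<bar>\<mu>\<bar>) * Qm \<bar>\<mu>\<bar> \<nu>)
           + (\<integral>\<^sup>+ t. ennreal (exp (- \<kappa> \<nu> * (t - \<tau>) / \<bar>\<mu>\<bar>) * (\<kappa> \<nu> / \<bar>\<mu>\<bar>)
                          * src hb c kB a I T \<nu> t) * indicator {\<tau>..Z} t \<partial>lborel))"
    using sol unfolding rte_solution_def by blast
  have mild': "AE x in M3. let \<tau> = fst x; \<mu> = fst (snd x); \<nu> = snd (snd x) in
        (\<tau> \<in> {0<..<Z} \<and> \<mu> \<in> {0<..<1} \<and> \<nu> > 0 \<longrightarrow>
           ennreal (I' \<tau> \<mu> \<nu>) =
             ennreal (exp (- \<kappa> \<nu> * \<tau> / \<mu>) * Rp \<mu> \<nu>)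
           + (\<integral>\<^sup>+ t. ennreal (exp (- \<kappa> \<nu> * (\<tau> - t) / \<mu>) * (\<kappa> \<nu> / \<mu>)
                          * src hb c kB a I' T' \<nu> t) * indicator {0..\<tau>} t \<partial>lborel))
      \<and> (\<tau> \<in> {0<..<Z} \<and> \<mu> \<in> {-1<..<0} \<and> \<nu> > 0 \<longrightarrow>
           ennreal (I' \<tau> \<mu> \<nu>) =
             ennreal (exp (- \<kappa> \<nu> * (Z - \<tau>) / \<bar>\<mu>\<bar>) * Rm \<bar>\<mu>\<bar> \<nu>)
           + (\<integral>\<^sup>+ t. ennreal (exp (- \<kappa> \<nu> * (t - \<tau>) / \<bar>\<mu>\<bar>) * (\<kappa> \<nu> / \<bar>\<mu>\<bar>)
                          * src hb c kB a I' T' \<nu> t) * indicator {\<tau>..Z} t \<partial>lborel))"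
    using sol' unfolding rte_solution_def by blast
  have nn: "AE x in M3. x \<in> {0<..<Z} \<times> ({-1<..<1} \<times> {0<..}) \<longrightarrow> I' (fst x) (fst (snd x)) (snd (snd x)) \<ge> 0"
    using sol' unfolding rte_solution_def by blast
  have mu0: "AE x in M3. fst (snd x) \<noteq> 0"
    by (rule AE_M3_snd[OF AE_pair_fst_gen[OF sigma_finite_lborel AE_lborel_singleton]])
  have q1: "AE x in M3. snd x \<in> {0<..<1} \<times> {0<..} \<longrightarrow>
               Qp (fst (snd x)) (snd (snd x)) \<le> Rp (fst (snd x)) (snd (snd x)) \<and> Qm (fst (snd x)) (snd (snd x)) \<le> Rm (fst (snd x)) (snd (snd x))"
    by (rule AE_M3_snd[OF QR])
  have q2: "AE x in M3. (- fst (snd x), snd (snd x)) \<in> {0<..<1} \<times> {0<..} \<longrightarrow>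
               Qp (- fst (snd x)) (snd (snd x)) \<le> Rp (- fst (snd x)) (snd (snd x)) \<and> Qm (- fst (snd x)) (snd (snd x)) \<le> Rm (- fst (snd x)) (snd (snd x))"
    using AE_M3_snd[OF AE_M2_reflect[OF QR]] by simp
  show ?thesis
    using AE_conjI[OF AE_conjI[OF mild mild'] AE_conjI[OF nn AE_conjI[OF mu0 AE_conjI[OF q1 q2]]]]
  proof (rule eventually_mono, goal_cases)
    case (1 x)
    obtain \<tau> \<mu> \<nu> where xe: "x = (\<tau>, \<mu>, \<nu>)" by (cases x) auto
    note asm = 1[unfolded xe, simplified Let_def fst_conv snd_conv]
    have "P \<tau> \<mu> \<nu> \<le> H \<tau> \<mu> \<nu>"
    proof (cases "(\<tau>, \<mu>, \<nu>) \<in> dom3 Z")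
      case False
      thus "P \<tau> \<mu> \<nu> \<le> H \<tau> \<mu> \<nu>" by (simp add: P_def)
    next
      case True
      hence x: "\<tau> \<in> {0<..<Z}" "-1 < \<mu>" "\<mu> < 1" "\<nu> > 0" by (auto simp: dom3_def)
      have nn': "I' \<tau> \<mu> \<nu> \<ge> 0" using asm x by auto
      show ?thesis
      proof (cases "\<mu> > 0")
        case True
        show ?thesis
          by (rule stepA_pos[OF x(1) True x(3) x(4) _ _ nn']) (use asm x True in auto)
      next
        case False
        hence neg: "\<mu> < 0" using asm by auto
        have ab: "\<bar>\<mu>\<bar> = - \<mu>" using neg by simp
        show ?thesis
          by (rule stepA_neg[OF x(1) x(2) neg x(4) _ _ nn']) (use asm x neg in \<open>auto simp: ab\<close>)
      qed
    qed
    thus ?case using xe by simp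
  qed
qed

end



lemma ennreal_add_le: "ennreal (x + y) \<le> ennreal x + ennreal y"
  using ennreal_split_le[of "x + y" x] by simp

context cmp begin

lemma planck_comp:
  assumes "f \<in> borel_measurable M" "h \<in> borel_measurable M"
  shows "(\<lambda>x. planck hb c kB (f x) (h x)) \<in> borel_measurable M"
proof -
  have p: "(\<lambda>x. (f x, h x)) \<in> M \<rightarrow>\<^sub>M borel \<Otimes>\<^sub>M borel" using assms by (auto intro!: measurable_Pair)
  show ?thesis using measurable_compose[OF p planck_meas] by simp
qed

lemma Jr_comp:
  assumes "f \<in> borel_measurable M" "h \<in> borel_measurable M"
  shows "(\<lambda>x. Jmean Ir (f x) (h x)) \<in> borel_measurable M" "(\<lambda>x. Jmean I'r (f x) (h x)) \<in> borel_measurable M"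
proof -
  have p: "(\<lambda>x. (f x, h x)) \<in> M \<rightarrow>\<^sub>M M2" using assms by (auto intro!: measurable_Pair simp: measurable_lborel2)
  show "(\<lambda>x. Jmean Ir (f x) (h x)) \<in> borel_measurable M"
    using measurable_compose[OF p Jmean_meas(1)] by simp
  show "(\<lambda>x. Jmean I'r (f x) (h x)) \<in> borel_measurable M"
    using measurable_compose[OF p Jmean_meas(2)] by simp
qed

lemma Jr_eq: "Jmean Ir \<nu> \<tau> = (1/2) * (\<integral>\<mu>. Ir \<tau> \<mu> \<nu> \<partial>lborel)" "Jmean I'r \<nu> \<tau> = (1/2) * (\<integral>\<mu>. I'r \<tau> \<mu> \<nu> \<partial>lborel)"
  unfolding Jmean_def set_lebesgue_integral_def
  by (auto intro!: arg_cong[where f="\<lambda>x. _ * x"] Bochner_Integration.integral_cong simp: Ir_def I'r_def dom3_def indicator_def)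

lemma P_eq: "P \<tau> \<mu> \<nu> = ennreal (\<kappa> \<nu> / 2) * ennreal (Ir \<tau> \<mu> \<nu> - I'r \<tau> \<mu> \<nu>)"
  unfolding P_def Ir_def I'r_def by (auto simp: indicator_def)

lemma wnn: "\<nu> > 0 \<Longrightarrow> 0 \<le> \<kappa> \<nu> * (1 - a \<nu>)"
  using kappa[of \<nu>] alb[of \<nu>] by auto


lemma kJ_le_P:
  assumes \<nu>: "\<nu> > 0" and i1: "integrable lborel (\<lambda>\<mu>. Ir \<tau> \<mu> \<nu>)" and i2: "integrable lborel (\<lambda>\<mu>. I'r \<tau> \<mu> \<nu>)"
  shows "ennreal (\<kappa> \<nu> * (Jmean Ir \<nu> \<tau> - Jmean I'r \<nu> \<tau>)) \<le> (\<integral>\<^sup>+\<mu>. P \<tau> \<mu> \<nu> \<partial>lborel)"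
proof -
  have k0: "0 \<le> \<kappa> \<nu> / 2" using kappa[OF \<nu>] by simp
  have id: "(\<integral>\<mu>. \<kappa> \<nu> / 2 * (Ir \<tau> \<mu> \<nu> - I'r \<tau> \<mu> \<nu>) \<partial>lborel)
     = \<kappa> \<nu> / 2 * ((\<integral>\<mu>. Ir \<tau> \<mu> \<nu> \<partial>lborel) - (\<integral>\<mu>. I'r \<tau> \<mu> \<nu> \<partial>lborel))"
    using Bochner_Integration.integral_diff[OF i1 i2] by simp
  have "ennreal (\<kappa> \<nu> * (Jmean Ir \<nu> \<tau> - Jmean I'r \<nu> \<tau>)) = ennreal (\<integral>\<mu>. \<kappa> \<nu> / 2 * (Ir \<tau> \<mu> \<nu> - I'r \<tau> \<mu> \<nu>) \<partial>lborel)"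
    unfolding id Jr_eq by (simp add: right_diff_distrib)
  also have "\<dots> \<le> (\<integral>\<^sup>+\<mu>. ennreal (\<kappa> \<nu> / 2 * (Ir \<tau> \<mu> \<nu> - I'r \<tau> \<mu> \<nu>)) \<partial>lborel)"
    using i1 i2 by (intro ennreal_integral_le) auto
  also have "\<dots> = (\<integral>\<^sup>+\<mu>. P \<tau> \<mu> \<nu> \<partial>lborel)"
    using k0 by (intro nn_integral_cong) (simp only: P_eq ennreal_mult'[OF k0])
  finally show ?thesis .
qed

definition "wB s = (\<integral>\<^sup>+\<nu>. ennreal (\<kappa> \<nu> * (1 - a \<nu>) * planck hb c kB \<nu> s) * indicator {0<..} \<nu> \<partial>lborel)"
definition "wBd s s' = (\<integral>\<^sup>+\<nu>. ennreal (\<kappa> \<nu> * (1 - a \<nu>) * (planck hb c kB \<nu> s - planck hb c kB \<nu> s')) * indicator {0<..} \<nu> \<partial>lborel)"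
definition "wJ F \<tau> = (\<integral>\<^sup>+\<nu>. ennreal (\<kappa> \<nu> * (1 - a \<nu>) * Jmean F \<nu> \<tau>) * indicator {0<..} \<nu> \<partial>lborel)"
definition "wJd \<tau> = (\<integral>\<^sup>+\<nu>. ennreal (\<kappa> \<nu> * (1 - a \<nu>) * (Jmean Ir \<nu> \<tau> - Jmean I'r \<nu> \<tau>)) * indicator {0<..} \<nu> \<partial>lborel)"

lemma tB: "\<tau> \<in> {0<..<Z} \<Longrightarrow> temp_eq hb c kB \<kappa> a I \<tau> s \<Longrightarrow> wB s = wJ Ir \<tau>"
  "\<tau> \<in> {0<..<Z} \<Longrightarrow> temp_eq hb c kB \<kappa> a I' \<tau> s \<Longrightarrow> wB s = wJ I'r \<tau>"
proof -
  assume \<tau>: "\<tau> \<in> {0<..<Z}"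
  have "(\<integral>\<^sup>+\<nu>. ennreal (\<kappa> \<nu> * (1 - a \<nu>) * Jmean I \<nu> \<tau>) * indicator {0<..} \<nu> \<partial>lborel) = wJ Ir \<tau>"
       "(\<integral>\<^sup>+\<nu>. ennreal (\<kappa> \<nu> * (1 - a \<nu>) * Jmean I' \<nu> \<tau>) * indicator {0<..} \<nu> \<partial>lborel) = wJ I'r \<tau>"
    unfolding wJ_def using \<tau> by (auto intro!: nn_integral_cong simp: indicator_def Jmean_eq)
  thus "temp_eq hb c kB \<kappa> a I \<tau> s \<Longrightarrow> wB s = wJ Ir \<tau>" "temp_eq hb c kB \<kappa> a I' \<tau> s \<Longrightarrow> wB s = wJ I'r \<tau>"
    unfolding temp_eq_def wB_def by auto
qed

lemma Jr_m[measurable]: "(\<lambda>\<nu>. Jmean Ir \<nu> \<tau>) \<in> borel_measurable borel" "(\<lambda>\<nu>. Jmean I'r \<nu> \<tau>) \<in> borel_measurable borel"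
  by (rule Jr_comp; simp)+
lemma B_m[measurable]: "(\<lambda>\<nu>. planck hb c kB \<nu> s) \<in> borel_measurable borel"
  by (rule planck_comp; simp)+

lemma finJ':
  assumes intI: "AE \<nu> in lborel. \<nu> > 0 \<longrightarrow> integrable lborel (\<lambda>\<mu>. I'r \<tau> \<mu> \<nu>)"
    and fin': "(\<integral>\<^sup>+\<nu>. \<integral>\<^sup>+\<mu>. ennreal \<bar>I'r \<tau> \<mu> \<nu>\<bar> \<partial>lborel \<partial>lborel) \<noteq> \<infinity>"
  shows "wJ I'r \<tau> \<noteq> \<infinity>"
proof -
  let ?J' = "\<lambda>\<nu>. Jmean I'r \<nu> \<tau>" and ?w = "\<lambda>\<nu>. \<kappa> \<nu> * (1 - a \<nu>)"
  have "wJ I'r \<tau> \<le> (\<integral>\<^sup>+\<nu>. ennreal (\<kappa>M / 2) * (\<integral>\<^sup>+\<mu>. ennreal \<bar>I'r \<tau> \<mu> \<nu>\<bar> \<partial>lborel) \<partial>lborel)"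
    unfolding wJ_def
  proof (rule nn_integral_mono_AE)
    show "AE \<nu> in lborel. ennreal (?w \<nu> * ?J' \<nu>) * indicator {0<..} \<nu> \<le> ennreal (\<kappa>M / 2) * (\<integral>\<^sup>+\<mu>. ennreal \<bar>I'r \<tau> \<mu> \<nu>\<bar> \<partial>lborel)"
      using intI proof (rule eventually_mono)
      fix \<nu> :: real
      assume ii: "0 < \<nu> \<longrightarrow> integrable lborel (\<lambda>\<mu>. I'r \<tau> \<mu> \<nu>)"
      show "ennreal (?w \<nu> * ?J' \<nu>) * indicator {0<..} \<nu> \<le> ennreal (\<kappa>M / 2) * (\<integral>\<^sup>+\<mu>. ennreal \<bar>I'r \<tau> \<mu> \<nu>\<bar> \<partial>lborel)"
      proof (cases "\<nu> > 0")
        case True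
        hence int: "integrable lborel (\<lambda>\<mu>. I'r \<tau> \<mu> \<nu>)" using ii by blast
        have "ennreal (?w \<nu> * ?J' \<nu>) \<le> ennreal (\<kappa>M * ?J' \<nu>)"
        proof (cases "?J' \<nu> \<ge> 0")
          case True
          have k1: "0 < \<kappa> \<nu>" "\<kappa> \<nu> \<le> \<kappa>M" "0 \<le> a \<nu>" using kappa[of \<nu>] alb[of \<nu>] \<open>\<nu> > 0\<close> by auto
          have "?w \<nu> \<le> \<kappa> \<nu> * 1" using k1 by (intro mult_left_mono) auto
          hence "?w \<nu> \<le> \<kappa>M" using k1 by linarith
          thus ?thesis using True by (intro ennreal_leI mult_right_mono)
        next
          case False
          hence "?w \<nu> * ?J' \<nu> \<le> 0" using wnn[OF True] by (simp add: mult_nonneg_nonpos)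
          thus ?thesis by (simp add: ennreal_neg)
        qed
        also have "ennreal (\<kappa>M * ?J' \<nu>) = ennreal (\<integral>\<mu>. \<kappa>M / 2 * I'r \<tau> \<mu> \<nu> \<partial>lborel)" by (simp add: Jr_eq)
        also have "\<dots> \<le> (\<integral>\<^sup>+\<mu>. ennreal (\<kappa>M / 2 * I'r \<tau> \<mu> \<nu>) \<partial>lborel)"
          using int by (intro ennreal_integral_le) auto
        also have "\<dots> \<le> (\<integral>\<^sup>+\<mu>. ennreal (\<kappa>M / 2) * ennreal \<bar>I'r \<tau> \<mu> \<nu>\<bar> \<partial>lborel)"
          using kM by (intro nn_integral_mono) (auto simp flip: ennreal_mult intro!: ennreal_leI mult_left_mono)
        also have "\<dots> = ennreal (\<kappa>M / 2) * (\<integral>\<^sup>+\<mu>. ennreal \<bar>I'r \<tau> \<mu> \<nu>\<bar> \<partial>lborel)"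
          by (rule nn_integral_cmult) measurable
        finally show ?thesis using True by simp
      qed simp
    qed
  qed
  also have "\<dots> = ennreal (\<kappa>M / 2) * (\<integral>\<^sup>+\<nu>. \<integral>\<^sup>+\<mu>. ennreal \<bar>I'r \<tau> \<mu> \<nu>\<bar> \<partial>lborel \<partial>lborel)"
    by (rule nn_integral_cmult) measurable
  also have "\<dots> < \<infinity>" using fin' by (simp add: ennreal_mult_less_top less_top)
  finally show ?thesis by simp
qed

lemma splitB:
  assumes "s' \<le> s"
  shows "wB s = wB s' + wBd s s'"
proof -
  have "wB s = (\<integral>\<^sup>+\<nu>. ennreal (\<kappa> \<nu> * (1 - a \<nu>) * planck hb c kB \<nu> s') * indicator {0<..} \<nu>
       + ennreal (\<kappa> \<nu> * (1 - a \<nu>) * (planck hb c kB \<nu> s - planck hb c kB \<nu> s')) * indicator {0<..} \<nu> \<partial>lborel)"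
    unfolding wB_def
  proof (intro nn_integral_cong)
    fix \<nu> :: real
    show "ennreal (\<kappa> \<nu> * (1 - a \<nu>) * planck hb c kB \<nu> s) * indicator {0<..} \<nu> = ennreal (\<kappa> \<nu> * (1 - a \<nu>) * planck hb c kB \<nu> s') * indicator {0<..} \<nu>
       + ennreal (\<kappa> \<nu> * (1 - a \<nu>) * (planck hb c kB \<nu> s - planck hb c kB \<nu> s')) * indicator {0<..} \<nu>"
    proof (cases "\<nu> > 0")
      case True
      have "0 \<le> \<kappa> \<nu> * (1 - a \<nu>) * planck hb c kB \<nu> s'" using wnn[OF True] planck_nonneg[OF phys True] by simp
      moreover have "0 \<le> \<kappa> \<nu> * (1 - a \<nu>) * (planck hb c kB \<nu> s - planck hb c kB \<nu> s')"
        using wnn[OF True] planck_mono[OF phys True assms] by simp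
      ultimately show ?thesis using True by (simp add: ennreal_plus[symmetric] right_diff_distrib del: ennreal_plus)
    qed simp
  qed
  also have "\<dots> = wB s' + wBd s s'" unfolding wB_def wBd_def
    by (rule nn_integral_add) measurable
  finally show ?thesis .
qed

lemma splitJ: "wJ Ir \<tau> \<le> wJ I'r \<tau> + wJd \<tau>"
proof -
  have "wJ Ir \<tau> \<le> (\<integral>\<^sup>+\<nu>. ennreal (\<kappa> \<nu> * (1 - a \<nu>) * Jmean I'r \<nu> \<tau>) * indicator {0<..} \<nu>
       + ennreal (\<kappa> \<nu> * (1 - a \<nu>) * (Jmean Ir \<nu> \<tau> - Jmean I'r \<nu> \<tau>)) * indicator {0<..} \<nu> \<partial>lborel)"
    unfolding wJ_def
  proof (intro nn_integral_mono)
    fix \<nu> :: real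
    show "ennreal (\<kappa> \<nu> * (1 - a \<nu>) * Jmean Ir \<nu> \<tau>) * indicator {0<..} \<nu> \<le> ennreal (\<kappa> \<nu> * (1 - a \<nu>) * Jmean I'r \<nu> \<tau>) * indicator {0<..} \<nu>
       + ennreal (\<kappa> \<nu> * (1 - a \<nu>) * (Jmean Ir \<nu> \<tau> - Jmean I'r \<nu> \<tau>)) * indicator {0<..} \<nu>"
      using ennreal_split_le[of "\<kappa> \<nu> * (1 - a \<nu>) * Jmean Ir \<nu> \<tau>" "\<kappa> \<nu> * (1 - a \<nu>) * Jmean I'r \<nu> \<tau>"]
      by (simp add: right_diff_distrib indicator_def)
  qed
  also have "\<dots> = wJ I'r \<tau> + wJd \<tau>" unfolding wJ_def wJd_def
    by (rule nn_integral_add) measurable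
  finally show ?thesis .
qed

lemma c2:
  assumes \<tau>: "\<tau> \<in> {0<..<Z}"
    and te: "temp_eq hb c kB \<kappa> a I \<tau> (T \<tau>)" and te': "temp_eq hb c kB \<kappa> a I' \<tau> (T' \<tau>)"
    and fin: "wJ I'r \<tau> \<noteq> \<infinity>"
  shows "wBd (T \<tau>) (T' \<tau>) \<le> wJd \<tau>"
proof (cases "T \<tau> \<le> T' \<tau>")
  case True
  have "wBd (T \<tau>) (T' \<tau>) = (\<integral>\<^sup>+(\<nu>::real). 0 \<partial>lborel)"
    unfolding wBd_def
  proof (intro nn_integral_cong)
    fix \<nu> :: real
    show "ennreal (\<kappa> \<nu> * (1 - a \<nu>) * (planck hb c kB \<nu> (T \<tau>) - planck hb c kB \<nu> (T' \<tau>))) * indicator {0<..} \<nu> = 0"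
    proof (cases "\<nu> > 0")
      case True
      have "planck hb c kB \<nu> (T \<tau>) \<le> planck hb c kB \<nu> (T' \<tau>)" using planck_mono[OF phys True \<open>T \<tau> \<le> T' \<tau>\<close>] .
      hence "\<kappa> \<nu> * (1 - a \<nu>) * (planck hb c kB \<nu> (T \<tau>) - planck hb c kB \<nu> (T' \<tau>)) \<le> 0"
        using wnn[OF True] by (simp add: mult_nonneg_nonpos)
      thus ?thesis by (simp add: ennreal_neg)
    qed simp
  qed
  thus ?thesis by simp
next
  case False
  have "wB (T' \<tau>) + wBd (T \<tau>) (T' \<tau>) = wB (T \<tau>)" using splitB[of "T' \<tau>" "T \<tau>"] False by simp
  also have "\<dots> = wJ Ir \<tau>" using tB(1)[OF \<tau> te] .
  also have "\<dots> \<le> wJ I'r \<tau> + wJd \<tau>" by (rule splitJ)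
  also have "wJ I'r \<tau> = wB (T' \<tau>)" using tB(2)[OF \<tau> te'] by simp
  finally show ?thesis using fin tB(2)[OF \<tau> te'] by (simp add: ennreal_add_left_cancel_le)
qed

lemma stepB:
  assumes \<tau>: "\<tau> \<in> {0<..<Z}"
    and te: "temp_eq hb c kB \<kappa> a I \<tau> (T \<tau>)" and te': "temp_eq hb c kB \<kappa> a I' \<tau> (T' \<tau>)"
    and intI: "AE \<nu> in lborel. \<nu> > 0 \<longrightarrow> integrable lborel (\<lambda>\<mu>. Ir \<tau> \<mu> \<nu>) \<and> integrable lborel (\<lambda>\<mu>. I'r \<tau> \<mu> \<nu>)"
    and fin': "(\<integral>\<^sup>+\<nu>. \<integral>\<^sup>+\<mu>. ennreal \<bar>I'r \<tau> \<mu> \<nu>\<bar> \<partial>lborel \<partial>lborel) \<noteq> \<infinity>"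
  shows "(\<integral>\<^sup>+\<nu>. G \<nu> \<tau> \<partial>lborel) \<le> (\<integral>\<^sup>+\<nu>. \<integral>\<^sup>+\<mu>. P \<tau> \<mu> \<nu> \<partial>lborel \<partial>lborel)"
proof -
  let ?J = "\<lambda>\<nu>. Jmean Ir \<nu> \<tau>" and ?J' = "\<lambda>\<nu>. Jmean I'r \<nu> \<tau>"
  let ?B = "\<lambda>\<nu>. planck hb c kB \<nu> (T \<tau>)" and ?B' = "\<lambda>\<nu>. planck hb c kB \<nu> (T' \<tau>)"
  let ?w = "\<lambda>\<nu>. \<kappa> \<nu> * (1 - a \<nu>)"
  let ?ind = "\<lambda>\<nu>::real. indicator {0<..} \<nu> :: ennreal"
  have intI': "AE \<nu> in lborel. \<nu> > 0 \<longrightarrow> integrable lborel (\<lambda>\<mu>. I'r \<tau> \<mu> \<nu>)"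
    using intI by (rule eventually_mono) blast
  have cc: "wBd (T \<tau>) (T' \<tau>) \<le> wJd \<tau>" using c2[OF \<tau> te te' finJ'[OF intI' fin']] .
  let ?A = "\<lambda>\<nu>. ennreal (\<kappa> \<nu> * a \<nu> * (?J \<nu> - ?J' \<nu>)) * ?ind \<nu>"
  have Gle: "(\<integral>\<^sup>+\<nu>. G \<nu> \<tau> \<partial>lborel) \<le> (\<integral>\<^sup>+\<nu>. ?A \<nu> + ennreal (?w \<nu> * (?B \<nu> - ?B' \<nu>)) * ?ind \<nu> \<partial>lborel)"
  proof (intro nn_integral_mono)
    fix \<nu> :: real
    show "G \<nu> \<tau> \<le> ?A \<nu> + ennreal (?w \<nu> * (?B \<nu> - ?B' \<nu>)) * ?ind \<nu>"
    proof (cases "\<nu> > 0")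
      case True
      have k0: "0 \<le> \<kappa> \<nu>" using kappa[OF True] by simp
      have "G \<nu> \<tau> = ennreal (\<kappa> \<nu> * (S \<nu> \<tau> - S' \<nu> \<tau>))"
        using True \<tau> unfolding G_def g_def by (simp add: ennreal_mult'[OF k0])
      also have "\<dots> = ennreal (\<kappa> \<nu> * a \<nu> * (?J \<nu> - ?J' \<nu>) + ?w \<nu> * (?B \<nu> - ?B' \<nu>))"
        unfolding S_def S'_def src_def by (simp add: algebra_simps)
      also have "\<dots> \<le> ennreal (\<kappa> \<nu> * a \<nu> * (?J \<nu> - ?J' \<nu>)) + ennreal (?w \<nu> * (?B \<nu> - ?B' \<nu>))"
        by (rule ennreal_add_le)
      finally show ?thesis using True by simp
    qed (simp add: G_def)
  qed
  also have "\<dots> = (\<integral>\<^sup>+\<nu>. ?A \<nu> \<partial>lborel) + wBd (T \<tau>) (T' \<tau>)"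
    unfolding wBd_def by (rule nn_integral_add) measurable
  also have "\<dots> \<le> (\<integral>\<^sup>+\<nu>. ?A \<nu> \<partial>lborel) + wJd \<tau>"
    using cc by (rule add_left_mono)
  also have "\<dots> = (\<integral>\<^sup>+\<nu>. ?A \<nu> + ennreal (?w \<nu> * (?J \<nu> - ?J' \<nu>)) * ?ind \<nu> \<partial>lborel)"
    unfolding wJd_def by (rule nn_integral_add[symmetric]) measurable
  also have "\<dots> = (\<integral>\<^sup>+\<nu>. ennreal (\<kappa> \<nu> * (?J \<nu> - ?J' \<nu>)) * ?ind \<nu> \<partial>lborel)"
  proof (intro nn_integral_cong)
    fix \<nu> :: real
    show "?A \<nu> + ennreal (?w \<nu> * (?J \<nu> - ?J' \<nu>)) * ?ind \<nu> = ennreal (\<kappa> \<nu> * (?J \<nu> - ?J' \<nu>)) * ?ind \<nu>"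
    proof (cases "\<nu> > 0")
      case True
      have ka: "0 \<le> \<kappa> \<nu> * a \<nu>" using kappa[OF True] alb[OF True] by simp
      have w: "0 \<le> ?w \<nu>" using wnn[OF True] .
      show ?thesis
      proof (cases "?J \<nu> - ?J' \<nu> \<ge> 0")
        case True
        have "ennreal (\<kappa> \<nu> * a \<nu> * (?J \<nu> - ?J' \<nu>)) + ennreal (?w \<nu> * (?J \<nu> - ?J' \<nu>))
            = ennreal (\<kappa> \<nu> * a \<nu> * (?J \<nu> - ?J' \<nu>) + ?w \<nu> * (?J \<nu> - ?J' \<nu>))"
          using ka w True by (intro ennreal_plus[symmetric]) auto
        also have "\<kappa> \<nu> * a \<nu> * (?J \<nu> - ?J' \<nu>) + ?w \<nu> * (?J \<nu> - ?J' \<nu>) = \<kappa> \<nu> * (?J \<nu> - ?J' \<nu>)"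
          by (simp add: algebra_simps)
        finally show ?thesis using \<open>\<nu> > 0\<close> by simp
      next
        case False
        hence "\<kappa> \<nu> * a \<nu> * (?J \<nu> - ?J' \<nu>) \<le> 0" "?w \<nu> * (?J \<nu> - ?J' \<nu>) \<le> 0" "\<kappa> \<nu> * (?J \<nu> - ?J' \<nu>) \<le> 0"
          using ka w kappa[OF \<open>\<nu> > 0\<close>] by (auto simp: mult_nonneg_nonpos)
        thus ?thesis by (simp add: ennreal_neg)
      qed
    qed simp
  qed
  also have "\<dots> \<le> (\<integral>\<^sup>+\<nu>. \<integral>\<^sup>+\<mu>. P \<tau> \<mu> \<nu> \<partial>lborel \<partial>lborel)"
  proof (rule nn_integral_mono_AE)
    show "AE \<nu> in lborel. ennreal (\<kappa> \<nu> * (?J \<nu> - ?J' \<nu>)) * ?ind \<nu> \<le> (\<integral>\<^sup>+\<mu>. P \<tau> \<mu> \<nu> \<partial>lborel)"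
      using intI proof (rule eventually_mono)
      fix \<nu> :: real
      assume ii: "0 < \<nu> \<longrightarrow> integrable lborel (\<lambda>\<mu>. Ir \<tau> \<mu> \<nu>) \<and> integrable lborel (\<lambda>\<mu>. I'r \<tau> \<mu> \<nu>)"
      show "ennreal (\<kappa> \<nu> * (?J \<nu> - ?J' \<nu>)) * ?ind \<nu> \<le> (\<integral>\<^sup>+\<mu>. P \<tau> \<mu> \<nu> \<partial>lborel)"
      proof (cases "\<nu> > 0")
        case True
        hence "integrable lborel (\<lambda>\<mu>. Ir \<tau> \<mu> \<nu>)" "integrable lborel (\<lambda>\<mu>. I'r \<tau> \<mu> \<nu>)" using ii by blast+
        from kJ_le_P[OF True this] show ?thesis using True by simp
      qed simp
    qed
  qed
  finally show ?thesis .
qed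

lemma not_AE_nonpos: "\<not> (AE \<nu> in lborel. (\<nu>::real) \<le> 0)"
proof
  assume "AE \<nu> in lborel. (\<nu>::real) \<le> 0"
  then obtain N where N: "{x\<in>space lborel. \<not> (x::real) \<le> 0} \<subseteq> N" "emeasure lborel N = 0" "N \<in> sets lborel"
    using AE_E by metis
  have "emeasure lborel {0<..(1::real)} \<le> emeasure lborel N"
    using N by (intro emeasure_mono) auto
  thus False using N by simp
qed

lemma wBd_pos:
  assumes "s' < s" and s0: "0 \<le> s'"
  shows "wBd s s' \<noteq> 0"
proof
  assume "wBd s s' = 0"
  hence "AE \<nu> in lborel. ennreal (\<kappa> \<nu> * (1 - a \<nu>) * (planck hb c kB \<nu> s - planck hb c kB \<nu> s')) * indicator {0<..} \<nu> = 0"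
  proof -
    have m: "(\<lambda>\<nu>. ennreal (\<kappa> \<nu> * (1 - a \<nu>) * (planck hb c kB \<nu> s - planck hb c kB \<nu> s')) * indicator {0<..} \<nu>) \<in> borel_measurable lborel"
      by measurable
    show ?thesis using nn_integral_0_iff_AE[OF m] \<open>wBd s s' = 0\<close> unfolding wBd_def by simp
  qed
  hence "AE \<nu> in lborel. (\<nu>::real) \<le> 0"
  proof (rule eventually_mono)
    fix \<nu> :: real
    assume z: "ennreal (\<kappa> \<nu> * (1 - a \<nu>) * (planck hb c kB \<nu> s - planck hb c kB \<nu> s')) * indicator {0<..} \<nu> = 0"
    show "\<nu> \<le> 0"
    proof (rule ccontr)
      assume "\<not> \<nu> \<le> 0"
      hence \<nu>: "\<nu> > 0" by simp
      have "0 < \<kappa> \<nu> * (1 - a \<nu>)" using kappa[OF \<nu>] alb[OF \<nu>] by simp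
      moreover have "planck hb c kB \<nu> s' < planck hb c kB \<nu> s"
      proof (cases "s > 0")
        case True show ?thesis using planck_strict[OF phys \<nu> assms(1) True] .
      next
        case False thus ?thesis using assms by simp
      qed
      ultimately have "0 < \<kappa> \<nu> * (1 - a \<nu>) * (planck hb c kB \<nu> s - planck hb c kB \<nu> s')" by simp
      moreover have ind1: "indicator {0<..} \<nu> = (1::ennreal)" using \<nu> by simp
      have "ennreal (\<kappa> \<nu> * (1 - a \<nu>) * (planck hb c kB \<nu> s - planck hb c kB \<nu> s')) = 0"
        using z unfolding ind1 by (simp only: mult_1_right)
      hence "\<kappa> \<nu> * (1 - a \<nu>) * (planck hb c kB \<nu> s - planck hb c kB \<nu> s') \<le> 0" by (simp only: ennreal_eq_0_iff)
      ultimately show False by linarith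
    qed
  qed
  thus False using not_AE_nonpos by simp
qed

lemma stepT:
  assumes \<tau>: "\<tau> \<in> {0<..<Z}"
    and te: "temp_eq hb c kB \<kappa> a I \<tau> (T \<tau>)" and te': "temp_eq hb c kB \<kappa> a I' \<tau> (T' \<tau>)"
    and intI: "AE \<nu> in lborel. \<nu> > 0 \<longrightarrow> integrable lborel (\<lambda>\<mu>. Ir \<tau> \<mu> \<nu>) \<and> integrable lborel (\<lambda>\<mu>. I'r \<tau> \<mu> \<nu>)"
    and fin': "(\<integral>\<^sup>+\<nu>. \<integral>\<^sup>+\<mu>. ennreal \<bar>I'r \<tau> \<mu> \<nu>\<bar> \<partial>lborel \<partial>lborel) \<noteq> \<infinity>"
    and P0: "AE \<nu> in lborel. (\<integral>\<^sup>+\<mu>. P \<tau> \<mu> \<nu> \<partial>lborel) = 0"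
  shows "T \<tau> \<le> T' \<tau>"
proof (rule ccontr)
  assume "\<not> T \<tau> \<le> T' \<tau>"
  hence lt: "T' \<tau> < T \<tau>" by simp
  have intI': "AE \<nu> in lborel. \<nu> > 0 \<longrightarrow> integrable lborel (\<lambda>\<mu>. I'r \<tau> \<mu> \<nu>)"
    using intI by (rule eventually_mono) blast
  have "wJ Ir \<tau> \<le> wJ I'r \<tau>"
    unfolding wJ_def
  proof (rule nn_integral_mono_AE)
    show "AE \<nu> in lborel. ennreal (\<kappa> \<nu> * (1 - a \<nu>) * Jmean Ir \<nu> \<tau>) * indicator {0<..} \<nu>
        \<le> ennreal (\<kappa> \<nu> * (1 - a \<nu>) * Jmean I'r \<nu> \<tau>) * indicator {0<..} \<nu>"
      using AE_conjI[OF intI P0] proof (rule eventually_mono)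
      fix \<nu> :: real
      assume ii: "(0 < \<nu> \<longrightarrow> integrable lborel (\<lambda>\<mu>. Ir \<tau> \<mu> \<nu>) \<and> integrable lborel (\<lambda>\<mu>. I'r \<tau> \<mu> \<nu>)) \<and> (\<integral>\<^sup>+\<mu>. P \<tau> \<mu> \<nu> \<partial>lborel) = 0"
      show "ennreal (\<kappa> \<nu> * (1 - a \<nu>) * Jmean Ir \<nu> \<tau>) * indicator {0<..} \<nu>
        \<le> ennreal (\<kappa> \<nu> * (1 - a \<nu>) * Jmean I'r \<nu> \<tau>) * indicator {0<..} \<nu>"
      proof (cases "\<nu> > 0")
        case True
        hence "integrable lborel (\<lambda>\<mu>. Ir \<tau> \<mu> \<nu>)" "integrable lborel (\<lambda>\<mu>. I'r \<tau> \<mu> \<nu>)" using ii by blast+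
        from kJ_le_P[OF True this] ii have "ennreal (\<kappa> \<nu> * (Jmean Ir \<nu> \<tau> - Jmean I'r \<nu> \<tau>)) \<le> 0" by simp
        hence "\<kappa> \<nu> * (Jmean Ir \<nu> \<tau> - Jmean I'r \<nu> \<tau>) \<le> 0" by (simp add: ennreal_eq_0_iff)
        hence "Jmean Ir \<nu> \<tau> \<le> Jmean I'r \<nu> \<tau>" using kappa[OF True] by (simp add: mult_le_0_iff)
        hence "\<kappa> \<nu> * (1 - a \<nu>) * Jmean Ir \<nu> \<tau> \<le> \<kappa> \<nu> * (1 - a \<nu>) * Jmean I'r \<nu> \<tau>"
          using wnn[OF True] by (rule mult_left_mono)
        thus ?thesis using True by (auto intro!: ennreal_leI)
      qed simp
    qed
  qed
  hence "wB (T \<tau>) \<le> wB (T' \<tau>)" using tB(1)[OF \<tau> te] tB(2)[OF \<tau> te'] by simp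
  hence "wB (T' \<tau>) + wBd (T \<tau>) (T' \<tau>) \<le> wB (T' \<tau>) + 0" using splitB[of "T' \<tau>" "T \<tau>"] lt by simp
  moreover have "wB (T' \<tau>) \<noteq> \<infinity>" using tB(2)[OF \<tau> te'] finJ'[OF intI' fin'] by simp
  ultimately have "wBd (T \<tau>) (T' \<tau>) \<le> 0" by (simp add: ennreal_add_left_cancel_le)
  moreover have "0 \<le> T' \<tau>" using te' unfolding temp_eq_def by simp
  ultimately show False using wBd_pos[OF lt] by simp
qed

end



context cmp begin

lemma comp3:
  assumes "f \<in> borel_measurable M" "f2 \<in> borel_measurable M" "h \<in> borel_measurable M"
  shows "(\<lambda>x. (f x, f2 x, h x)) \<in> M \<rightarrow>\<^sub>M M3"
  using assms by (auto intro!: measurable_Pair simp: measurable_lborel2)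

lemma P_comp[measurable (raw)]:
  assumes "f \<in> borel_measurable M" "f2 \<in> borel_measurable M" "h \<in> borel_measurable M"
  shows "(\<lambda>x. P (f x) (f2 x) (h x)) \<in> borel_measurable M"
  using measurable_compose[OF comp3[OF assms] P_meas] by simp

lemma H_comp[measurable (raw)]:
  assumes "f \<in> borel_measurable M" "f2 \<in> borel_measurable M" "h \<in> borel_measurable M"
  shows "(\<lambda>x. H (f x) (f2 x) (h x)) \<in> borel_measurable M"
  using measurable_compose[OF comp3[OF assms] H_meas] by simp

lemma G_comp[measurable (raw)]:
  assumes "f \<in> borel_measurable M" "h \<in> borel_measurable M"
  shows "(\<lambda>x. G (f x) (h x)) \<in> borel_measurable M"
  unfolding G_def using assms by measurable

lemma Ek_comp[measurable (raw)]:
  assumes [measurable]: "f \<in> borel_measurable M" "h \<in> borel_measurable M"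
  shows "(\<lambda>x. Ek Z (f x) (h x)) \<in> borel_measurable M"
  unfolding Ek_def by measurable

lemma Wf_comp[measurable (raw)]:
  assumes "f \<in> borel_measurable M" "h \<in> borel_measurable M"
  shows "(\<lambda>x. Wf (f x) (h x)) \<in> borel_measurable M"
  unfolding Wf_def using assms by measurable

lemma fin_AE:
  "AE \<tau> in lborel. (\<integral>\<^sup>+\<nu>. \<integral>\<^sup>+\<mu>. ennreal \<bar>I'r \<tau> \<mu> \<nu>\<bar> \<partial>lborel \<partial>lborel) \<noteq> \<infinity>
     \<and> (AE \<nu> in lborel. \<nu> > 0 \<longrightarrow> integrable lborel (\<lambda>\<mu>. Ir \<tau> \<mu> \<nu>) \<and> integrable lborel (\<lambda>\<mu>. I'r \<tau> \<mu> \<nu>))"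
proof -
  have fin3: "(\<integral>\<^sup>+\<tau>. \<integral>\<^sup>+\<nu>. \<integral>\<^sup>+\<mu>. ennreal \<bar>Ir \<tau> \<mu> \<nu>\<bar> \<partial>lborel \<partial>lborel \<partial>lborel) \<noteq> \<infinity>"
       "(\<integral>\<^sup>+\<tau>. \<integral>\<^sup>+\<nu>. \<integral>\<^sup>+\<mu>. ennreal \<bar>I'r \<tau> \<mu> \<nu>\<bar> \<partial>lborel \<partial>lborel \<partial>lborel) \<noteq> \<infinity>"
  proof -
    have "integral\<^sup>N M3 (\<lambda>x. ennreal (norm ((\<lambda>(\<tau>, \<mu>, \<nu>). Ir \<tau> \<mu> \<nu>) x))) < \<infinity>"
         "integral\<^sup>N M3 (\<lambda>x. ennreal (norm ((\<lambda>(\<tau>, \<mu>, \<nu>). I'r \<tau> \<mu> \<nu>) x))) < \<infinity>"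
      using int_Ir unfolding integrable_iff_bounded by auto
    moreover have "integral\<^sup>N M3 (\<lambda>x. ennreal (norm ((\<lambda>(\<tau>, \<mu>, \<nu>). Ir \<tau> \<mu> \<nu>) x)))
      = (\<integral>\<^sup>+\<tau>. \<integral>\<^sup>+\<nu>. \<integral>\<^sup>+\<mu>. ennreal \<bar>Ir \<tau> \<mu> \<nu>\<bar> \<partial>lborel \<partial>lborel \<partial>lborel)"
      apply (subst tonelli3)
       apply (unfold case_prod_beta')
       apply measurable
      done
    moreover have "integral\<^sup>N M3 (\<lambda>x. ennreal (norm ((\<lambda>(\<tau>, \<mu>, \<nu>). I'r \<tau> \<mu> \<nu>) x)))
      = (\<integral>\<^sup>+\<tau>. \<integral>\<^sup>+\<nu>. \<integral>\<^sup>+\<mu>. ennreal \<bar>I'r \<tau> \<mu> \<nu>\<bar> \<partial>lborel \<partial>lborel \<partial>lborel)"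
      apply (subst tonelli3)
       apply (unfold case_prod_beta')
       apply measurable
      done
    ultimately show "(\<integral>\<^sup>+\<tau>. \<integral>\<^sup>+\<nu>. \<integral>\<^sup>+\<mu>. ennreal \<bar>Ir \<tau> \<mu> \<nu>\<bar> \<partial>lborel \<partial>lborel \<partial>lborel) \<noteq> \<infinity>"
       "(\<integral>\<^sup>+\<tau>. \<integral>\<^sup>+\<nu>. \<integral>\<^sup>+\<mu>. ennreal \<bar>I'r \<tau> \<mu> \<nu>\<bar> \<partial>lborel \<partial>lborel \<partial>lborel) \<noteq> \<infinity>"
      by auto
  qed
  have a1: "AE \<tau> in lborel. (\<integral>\<^sup>+\<nu>. \<integral>\<^sup>+\<mu>. ennreal \<bar>Ir \<tau> \<mu> \<nu>\<bar> \<partial>lborel \<partial>lborel) \<noteq> \<infinity>"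
    by (rule nn_integral_PInf_AE[OF _ fin3(1)]) measurable
  have a2: "AE \<tau> in lborel. (\<integral>\<^sup>+\<nu>. \<integral>\<^sup>+\<mu>. ennreal \<bar>I'r \<tau> \<mu> \<nu>\<bar> \<partial>lborel \<partial>lborel) \<noteq> \<infinity>"
    by (rule nn_integral_PInf_AE[OF _ fin3(2)]) measurable
  show ?thesis
    using AE_conjI[OF a1 a2]
  proof (rule eventually_mono)
    fix \<tau> :: real
    assume A: "(\<integral>\<^sup>+\<nu>. \<integral>\<^sup>+\<mu>. ennreal \<bar>Ir \<tau> \<mu> \<nu>\<bar> \<partial>lborel \<partial>lborel) \<noteq> \<infinity> \<and> (\<integral>\<^sup>+\<nu>. \<integral>\<^sup>+\<mu>. ennreal \<bar>I'r \<tau> \<mu> \<nu>\<bar> \<partial>lborel \<partial>lborel) \<noteq> \<infinity>"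
    have b1: "AE \<nu> in lborel. (\<integral>\<^sup>+\<mu>. ennreal \<bar>Ir \<tau> \<mu> \<nu>\<bar> \<partial>lborel) \<noteq> \<infinity>"
      by (rule nn_integral_PInf_AE) (use A in \<open>measurable, auto\<close>)
    have b2: "AE \<nu> in lborel. (\<integral>\<^sup>+\<mu>. ennreal \<bar>I'r \<tau> \<mu> \<nu>\<bar> \<partial>lborel) \<noteq> \<infinity>"
      by (rule nn_integral_PInf_AE) (use A in \<open>measurable, auto\<close>)
    have "AE \<nu> in lborel. \<nu> > 0 \<longrightarrow> integrable lborel (\<lambda>\<mu>. Ir \<tau> \<mu> \<nu>) \<and> integrable lborel (\<lambda>\<mu>. I'r \<tau> \<mu> \<nu>)"
      using AE_conjI[OF b1 b2]
    proof (rule eventually_mono)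
      fix \<nu> :: real
      assume B: "(\<integral>\<^sup>+\<mu>. ennreal \<bar>Ir \<tau> \<mu> \<nu>\<bar> \<partial>lborel) \<noteq> \<infinity> \<and> (\<integral>\<^sup>+\<mu>. ennreal \<bar>I'r \<tau> \<mu> \<nu>\<bar> \<partial>lborel) \<noteq> \<infinity>"
      have "integrable lborel (\<lambda>\<mu>. Ir \<tau> \<mu> \<nu>)"
        by (rule integrableI_bounded) (use B in \<open>measurable, auto simp: less_top\<close>)
      moreover have "integrable lborel (\<lambda>\<mu>. I'r \<tau> \<mu> \<nu>)"
        by (rule integrableI_bounded) (use B in \<open>measurable, auto simp: less_top\<close>)
      ultimately show "\<nu> > 0 \<longrightarrow> integrable lborel (\<lambda>\<mu>. Ir \<tau> \<mu> \<nu>) \<and> integrable lborel (\<lambda>\<mu>. I'r \<tau> \<mu> \<nu>)" by blast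
    qed
    thus "(\<integral>\<^sup>+\<nu>. \<integral>\<^sup>+\<mu>. ennreal \<bar>I'r \<tau> \<mu> \<nu>\<bar> \<partial>lborel \<partial>lborel) \<noteq> \<infinity>
     \<and> (AE \<nu> in lborel. \<nu> > 0 \<longrightarrow> integrable lborel (\<lambda>\<mu>. Ir \<tau> \<mu> \<nu>) \<and> integrable lborel (\<lambda>\<mu>. I'r \<tau> \<mu> \<nu>))"
      using A by blast
  qed
qed

lemma Pfin: "integral\<^sup>N M3 (\<lambda>x. P (fst x) (fst (snd x)) (snd (snd x))) \<noteq> \<infinity>"
proof -
  let ?a = "\<lambda>x. ennreal \<bar>Ir (fst x) (fst (snd x)) (snd (snd x))\<bar>"
  let ?b = "\<lambda>x. ennreal \<bar>I'r (fst x) (fst (snd x)) (snd (snd x))\<bar>"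
  have fa: "integral\<^sup>N M3 ?a < \<infinity>" "integral\<^sup>N M3 ?b < \<infinity>"
    using int_Ir unfolding integrable_iff_bounded by (auto simp: case_prod_beta')
  have "integral\<^sup>N M3 (\<lambda>x. P (fst x) (fst (snd x)) (snd (snd x))) \<le> integral\<^sup>N M3 (\<lambda>x. ennreal (\<kappa>M / 2) * (?a x + ?b x))"
  proof (intro nn_integral_mono)
    fix x :: "real \<times> real \<times> real"
    obtain \<tau> \<mu> \<nu> where x: "x = (\<tau>, \<mu>, \<nu>)" by (cases x) auto
    have "P \<tau> \<mu> \<nu> \<le> ennreal (\<kappa>M / 2) * (ennreal \<bar>Ir \<tau> \<mu> \<nu>\<bar> + ennreal \<bar>I'r \<tau> \<mu> \<nu>\<bar>)"
    proof (cases "\<nu> > 0")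
      case True
      have "P \<tau> \<mu> \<nu> = ennreal (\<kappa> \<nu> / 2) * ennreal (Ir \<tau> \<mu> \<nu> - I'r \<tau> \<mu> \<nu>)" by (rule P_eq)
      also have "\<dots> \<le> ennreal (\<kappa>M / 2) * ennreal (\<bar>Ir \<tau> \<mu> \<nu>\<bar> + \<bar>I'r \<tau> \<mu> \<nu>\<bar>)"
        using kappa[OF True] by (intro mult_mono ennreal_leI) auto
      finally show ?thesis by (simp add: ennreal_plus)
    next
      case False
      hence "Ir \<tau> \<mu> \<nu> = 0" "I'r \<tau> \<mu> \<nu> = 0" by (auto simp: Ir_def I'r_def dom3_def)
      thus ?thesis by (simp add: P_eq)
    qed
    thus "P (fst x) (fst (snd x)) (snd (snd x)) \<le> ennreal (\<kappa>M / 2) * (?a x + ?b x)" using x by simp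
  qed
  also have "\<dots> = ennreal (\<kappa>M / 2) * (integral\<^sup>N M3 ?a + integral\<^sup>N M3 ?b)"
  proof -
    have addi: "integral\<^sup>N M3 (\<lambda>x. ?a x + ?b x) = integral\<^sup>N M3 ?a + integral\<^sup>N M3 ?b"
      by (rule nn_integral_add) measurable
    show ?thesis by (subst nn_integral_cmult) (measurable, simp add: addi)
  qed
  also have "\<dots> < \<infinity>" using fa by (simp add: ennreal_mult_less_top)
  finally show ?thesis by simp
qed

lemma stepD_nu:
  "(\<integral>\<^sup>+\<tau>. \<integral>\<^sup>+\<mu>. H \<tau> \<mu> \<nu> \<partial>lborel \<partial>lborel) + (\<integral>\<^sup>+\<tau>. Wf \<nu> \<tau> \<partial>lborel) \<le> (\<integral>\<^sup>+\<tau>. G \<nu> \<tau> \<partial>lborel)"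
proof (cases "\<nu> > 0")
  case True
  have k: "\<kappa> \<nu> > 0" using kappa[OF True] by simp
  have gm: "g \<nu> \<in> borel_measurable borel" by measurable
  show ?thesis using stepD[OF k gm, of Z] True
    by (simp add: H_def Lg_def Wf_def G_def mult.assoc)
next
  case False
  thus ?thesis by (simp add: H_def Wf_def G_def)
qed

lemma H_zero:
  assumes \<nu>: "\<nu> > 0" and W0: "AE \<tau> in lborel. Wf \<nu> \<tau> = 0"
  shows "(\<integral>\<^sup>+\<tau>. \<integral>\<^sup>+\<mu>. H \<tau> \<mu> \<nu> \<partial>lborel \<partial>lborel) = 0"
proof -
  have k: "\<kappa> \<nu> > 0" using kappa[OF \<nu>] by simp
  have g0: "AE t in lborel. t \<in> {0<..<Z} \<longrightarrow> g \<nu> t = 0"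
    using W0
  proof (rule eventually_mono)
    fix t assume "Wf \<nu> t = 0"
    thus "t \<in> {0<..<Z} \<longrightarrow> g \<nu> t = 0" using Ek_pos[OF k, of t Z] \<nu> by (auto simp: Wf_def)
  qed
  have "H \<tau> \<mu> \<nu> = 0" for \<tau> \<mu>
  proof (cases "\<tau> \<in> {0<..<Z}")
    case True
    have "Lg \<tau> \<mu> \<nu> = (\<integral>\<^sup>+(t::real). 0 \<partial>lborel)"
      unfolding Lg_def
    proof (rule nn_integral_cong_AE)
      show "AE t in lborel. Kern Z (\<kappa> \<nu>) \<tau> \<mu> t * g \<nu> t = 0"
        using g0
      proof (rule eventually_mono)
        fix t assume "t \<in> {0<..<Z} \<longrightarrow> g \<nu> t = 0"
        thus "Kern Z (\<kappa> \<nu>) \<tau> \<mu> t * g \<nu> t = 0" using True by (auto simp: Kern_def)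
      qed
    qed
    thus ?thesis by (simp add: H_def)
  qed (simp add: H_def)
  thus ?thesis by simp
qed

lemma comparison:
  "AE x in M3. x \<in> dom3 Z \<longrightarrow> I (fst x) (fst (snd x)) (snd (snd x)) \<le> I' (fst x) (fst (snd x)) (snd (snd x)) \<and> T (fst x) \<le> T' (fst x)"
proof -
  let ?P3 = "\<lambda>x. P (fst x) (fst (snd x)) (snd (snd x))"
  let ?H3 = "\<lambda>x. H (fst x) (fst (snd x)) (snd (snd x))"
  define X where "X = (\<integral>\<^sup>+\<nu>. \<integral>\<^sup>+\<tau>. G \<nu> \<tau> \<partial>lborel \<partial>lborel)"
  define Y where "Y = (\<integral>\<^sup>+\<nu>. \<integral>\<^sup>+\<tau>. \<integral>\<^sup>+\<mu>. H \<tau> \<mu> \<nu> \<partial>lborel \<partial>lborel \<partial>lborel)"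
  define W where "W = (\<integral>\<^sup>+\<nu>. \<integral>\<^sup>+\<tau>. Wf \<nu> \<tau> \<partial>lborel \<partial>lborel)"
  have good: "AE \<tau> in lborel. \<tau> \<in> {0<..<Z} \<longrightarrow> temp_eq hb c kB \<kappa> a I \<tau> (T \<tau>) \<and> temp_eq hb c kB \<kappa> a I' \<tau> (T' \<tau>)"
  proof -
    have "AE \<tau> in lborel. \<tau> \<in> {0<..<Z} \<longrightarrow> temp_eq hb c kB \<kappa> a I \<tau> (T \<tau>)"
         "AE \<tau> in lborel. \<tau> \<in> {0<..<Z} \<longrightarrow> temp_eq hb c kB \<kappa> a I' \<tau> (T' \<tau>)"
      using sol sol' unfolding rte_solution_def by auto
    thus ?thesis by eventually_elim auto
  qed
  have P3: "integral\<^sup>N M3 ?P3 = (\<integral>\<^sup>+\<tau>. \<integral>\<^sup>+\<nu>. \<integral>\<^sup>+\<mu>. P \<tau> \<mu> \<nu> \<partial>lborel \<partial>lborel \<partial>lborel)"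
    by (subst tonelli3[OF P_meas]) simp
  have H3: "integral\<^sup>N M3 ?H3 = Y"
  proof -
    have "integral\<^sup>N M3 ?H3 = (\<integral>\<^sup>+\<tau>. \<integral>\<^sup>+\<nu>. \<integral>\<^sup>+\<mu>. H \<tau> \<mu> \<nu> \<partial>lborel \<partial>lborel \<partial>lborel)"
      by (subst tonelli3[OF H_meas]) simp
    also have "\<dots> = Y" unfolding Y_def by (rule lborel_pair.Fubini'[symmetric]) measurable
    finally show ?thesis .
  qed
  have XP: "X \<le> integral\<^sup>N M3 ?P3"
  proof -
    have "X = (\<integral>\<^sup>+\<tau>. \<integral>\<^sup>+\<nu>. G \<nu> \<tau> \<partial>lborel \<partial>lborel)"
      unfolding X_def by (rule lborel_pair.Fubini') measurable
    also have "\<dots> \<le> (\<integral>\<^sup>+\<tau>. \<integral>\<^sup>+\<nu>. \<integral>\<^sup>+\<mu>. P \<tau> \<mu> \<nu> \<partial>lborel \<partial>lborel \<partial>lborel)"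
    proof (rule nn_integral_mono_AE)
      show "AE \<tau> in lborel. (\<integral>\<^sup>+\<nu>. G \<nu> \<tau> \<partial>lborel) \<le> (\<integral>\<^sup>+\<nu>. \<integral>\<^sup>+\<mu>. P \<tau> \<mu> \<nu> \<partial>lborel \<partial>lborel)"
        using AE_conjI[OF good fin_AE]
      proof (rule eventually_mono, clarify)
        fix \<tau> :: real
        assume g: "\<tau> \<in> {0<..<Z} \<longrightarrow> temp_eq hb c kB \<kappa> a I \<tau> (T \<tau>) \<and> temp_eq hb c kB \<kappa> a I' \<tau> (T' \<tau>)"
          and f1: "(\<integral>\<^sup>+\<nu>. \<integral>\<^sup>+\<mu>. ennreal \<bar>I'r \<tau> \<mu> \<nu>\<bar> \<partial>lborel \<partial>lborel) \<noteq> \<infinity>"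
          and f2: "AE \<nu> in lborel. \<nu> > 0 \<longrightarrow> integrable lborel (\<lambda>\<mu>. Ir \<tau> \<mu> \<nu>) \<and> integrable lborel (\<lambda>\<mu>. I'r \<tau> \<mu> \<nu>)"
        show "(\<integral>\<^sup>+\<nu>. G \<nu> \<tau> \<partial>lborel) \<le> (\<integral>\<^sup>+\<nu>. \<integral>\<^sup>+\<mu>. P \<tau> \<mu> \<nu> \<partial>lborel \<partial>lborel)"
        proof (cases "\<tau> \<in> {0<..<Z}")
          case True
          thus ?thesis using stepB[OF True _ _ f2 f1] g by blast
        next
          case False
          hence "\<And>\<nu>. G \<nu> \<tau> = 0" by (simp add: G_def)
          thus ?thesis by simp
        qed
      qed
    qed
    finally show ?thesis using P3 by simp
  qed
  have PH: "integral\<^sup>N M3 ?P3 \<le> Y"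
    using H3 nn_integral_mono_AE[OF stepA] by simp
  have YW: "Y + W \<le> X"
  proof -
    have "Y + W = (\<integral>\<^sup>+\<nu>. (\<integral>\<^sup>+\<tau>. \<integral>\<^sup>+\<mu>. H \<tau> \<mu> \<nu> \<partial>lborel \<partial>lborel) + (\<integral>\<^sup>+\<tau>. Wf \<nu> \<tau> \<partial>lborel) \<partial>lborel)"
      unfolding Y_def W_def by (rule nn_integral_add[symmetric]) measurable
    also have "\<dots> \<le> X" unfolding X_def by (intro nn_integral_mono stepD_nu)
    finally show ?thesis .
  qed
  have Xfin: "X \<noteq> \<infinity>" using XP Pfin by (auto simp: top_unique)
  have XY: "X \<le> Y" using XP PH by (rule order_trans)
  have "X + W \<le> Y + W" using XY by (rule add_right_mono)
  also have "\<dots> \<le> X" by (rule YW)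
  finally have "X + W \<le> X + 0" by simp
  hence W0: "W = 0" using Xfin by (simp add: ennreal_add_left_cancel_le)
  have "AE \<nu> in lborel. (\<integral>\<^sup>+\<tau>. Wf \<nu> \<tau> \<partial>lborel) = 0"
    using W0 unfolding W_def by (subst (asm) nn_integral_0_iff_AE) measurable
  hence "AE \<nu> in lborel. (\<integral>\<^sup>+\<tau>. \<integral>\<^sup>+\<mu>. H \<tau> \<mu> \<nu> \<partial>lborel \<partial>lborel) = 0"
  proof (rule eventually_mono)
    fix \<nu> :: real
    assume w0: "(\<integral>\<^sup>+\<tau>. Wf \<nu> \<tau> \<partial>lborel) = 0"
    show "(\<integral>\<^sup>+\<tau>. \<integral>\<^sup>+\<mu>. H \<tau> \<mu> \<nu> \<partial>lborel \<partial>lborel) = 0"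
    proof (cases "\<nu> > 0")
      case True
      have "AE \<tau> in lborel. Wf \<nu> \<tau> = 0" using w0 by (subst (asm) nn_integral_0_iff_AE) measurable
      thus ?thesis using H_zero[OF True] by blast
    next
      case False thus ?thesis by (simp add: H_def)
    qed
  qed
  hence "Y = 0" unfolding Y_def by (simp add: nn_integral_0_iff_AE)
  hence PM0: "integral\<^sup>N M3 ?P3 = 0" using PH by simp
  hence AEP: "AE x in M3. ?P3 x = 0" by (subst (asm) nn_integral_0_iff_AE) measurable
  have "AE \<tau> in lborel. (\<integral>\<^sup>+\<nu>. \<integral>\<^sup>+\<mu>. P \<tau> \<mu> \<nu> \<partial>lborel \<partial>lborel) = 0"
  proof -
    have "(\<integral>\<^sup>+\<tau>. \<integral>\<^sup>+\<nu>. \<integral>\<^sup>+\<mu>. P \<tau> \<mu> \<nu> \<partial>lborel \<partial>lborel \<partial>lborel) = 0" using PM0 P3 by simp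
    thus ?thesis by (subst (asm) nn_integral_0_iff_AE) measurable
  qed
  hence "AE \<tau> in lborel. AE \<nu> in lborel. (\<integral>\<^sup>+\<mu>. P \<tau> \<mu> \<nu> \<partial>lborel) = 0"
  proof (rule eventually_mono)
    fix \<tau> :: real
    assume "(\<integral>\<^sup>+\<nu>. \<integral>\<^sup>+\<mu>. P \<tau> \<mu> \<nu> \<partial>lborel \<partial>lborel) = 0"
    thus "AE \<nu> in lborel. (\<integral>\<^sup>+\<mu>. P \<tau> \<mu> \<nu> \<partial>lborel) = 0"
      by (subst (asm) nn_integral_0_iff_AE) measurable
  qed
  hence AET: "AE \<tau> in lborel. \<tau> \<in> {0<..<Z} \<longrightarrow> T \<tau> \<le> T' \<tau>"
    using AE_conjI[OF good fin_AE]
    by eventually_elim (use stepT in blast)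
  show ?thesis
    using AE_conjI[OF AEP AE_M3_fst[OF AET]]
  proof (rule eventually_mono, goal_cases)
    case (1 x)
    obtain \<tau> \<mu> \<nu> where xe: "x = (\<tau>, \<mu>, \<nu>)" by (cases x) auto
    have p0: "P \<tau> \<mu> \<nu> = 0" and tt: "\<tau> \<in> {0<..<Z} \<longrightarrow> T \<tau> \<le> T' \<tau>" using 1 xe by auto
    have "(\<tau>, \<mu>, \<nu>) \<in> dom3 Z \<longrightarrow> I \<tau> \<mu> \<nu> \<le> I' \<tau> \<mu> \<nu> \<and> T \<tau> \<le> T' \<tau>"
    proof
      assume d: "(\<tau>, \<mu>, \<nu>) \<in> dom3 Z"
      have k: "\<kappa> \<nu> / 2 > 0" using d kappa[of \<nu>] by (auto simp: dom3_def)
      have "ennreal (Ir \<tau> \<mu> \<nu> - I'r \<tau> \<mu> \<nu>) = 0" using p0 k by (simp add: P_eq)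
      hence "Ir \<tau> \<mu> \<nu> \<le> I'r \<tau> \<mu> \<nu>" by (simp add: ennreal_eq_0_iff)
      hence "I \<tau> \<mu> \<nu> \<le> I' \<tau> \<mu> \<nu>" using d by (simp add: Ir_def I'r_def)
      moreover have "T \<tau> \<le> T' \<tau>" using tt d by (auto simp: dom3_def)
      ultimately show "I \<tau> \<mu> \<nu> \<le> I' \<tau> \<mu> \<nu> \<and> T \<tau> \<le> T' \<tau>" by simp
    qed
    thus ?case using xe by simp
  qed
qed
end


theorem mainTheorem5:
  fixes hb c kB Z \<kappa>M :: real
    and \<kappa> a :: "real \<Rightarrow> real"
    and Qp Qm Rp Rm :: "real \<Rightarrow> real \<Rightarrow> real"
    and I I' :: "real \<Rightarrow> real \<Rightarrow> real \<Rightarrow> real"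
    and T T' :: "real \<Rightarrow> real"
  assumes phys: "hb > 0" "c > 0" "kB > 0"
    and Z: "Z > 0"
    and meas: "\<kappa> \<in> borel_measurable borel" "a \<in> borel_measurable borel"
    and kappa: "\<And>\<nu>. \<nu> > 0 \<Longrightarrow> 0 < \<kappa> \<nu> \<and> \<kappa> \<nu> \<le> \<kappa>M"
    and alb: "\<And>\<nu>. \<nu> > 0 \<Longrightarrow> 0 \<le> a \<nu> \<and> a \<nu> < 1"
    and L1: "set_integrable (lborel \<Otimes>\<^sub>M lborel) ({0<..<1} \<times> {0<..}) (\<lambda>(\<mu>, \<nu>). Qp \<mu> \<nu>)"
            "set_integrable (lborel \<Otimes>\<^sub>M lborel) ({0<..<1} \<times> {0<..}) (\<lambda>(\<mu>, \<nu>). Qm \<mu> \<nu>)"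
            "set_integrable (lborel \<Otimes>\<^sub>M lborel) ({0<..<1} \<times> {0<..}) (\<lambda>(\<mu>, \<nu>). Rp \<mu> \<nu>)"
            "set_integrable (lborel \<Otimes>\<^sub>M lborel) ({0<..<1} \<times> {0<..}) (\<lambda>(\<mu>, \<nu>). Rm \<mu> \<nu>)"
    and QR: "AE x in lborel \<Otimes>\<^sub>M lborel. x \<in> {0<..<1} \<times> {0<..} \<longrightarrow>
               0 \<le> Qp (fst x) (snd x) \<and> Qp (fst x) (snd x) \<le> Rp (fst x) (snd x) \<and>
               0 \<le> Qm (fst x) (snd x) \<and> Qm (fst x) (snd x) \<le> Rm (fst x) (snd x)"
    and sol: "rte_solution hb c kB Z \<kappa> a Qp Qm I T"
    and sol': "rte_solution hb c kB Z \<kappa> a Rp Rm I' T'"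
  shows "(AE x in lborel \<Otimes>\<^sub>M (lborel \<Otimes>\<^sub>M lborel).
            x \<in> {0<..<Z} \<times> ({-1<..<1} \<times> {0<..}) \<longrightarrow>
              I (fst x) (fst (snd x)) (snd (snd x)) \<le> I' (fst x) (fst (snd x)) (snd (snd x))
              \<and> T (fst x) \<le> T' (fst x))
       \<and> ((AE x in lborel \<Otimes>\<^sub>M lborel. x \<in> {0<..<1} \<times> {0<..} \<longrightarrow>
              Qp (fst x) (snd x) = Rp (fst x) (snd x) \<and> Qm (fst x) (snd x) = Rm (fst x) (snd x))
          \<longrightarrow> (AE x in lborel \<Otimes>\<^sub>M (lborel \<Otimes>\<^sub>M lborel).
                x \<in> {0<..<Z} \<times> ({-1<..<1} \<times> {0<..}) \<longrightarrow>
                  I (fst x) (fst (snd x)) (snd (snd x)) = I' (fst x) (fst (snd x)) (snd (snd x))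
                  \<and> T (fst x) = T' (fst x)))"
proof -
  have QR1: "AE x in lborel \<Otimes>\<^sub>M lborel. x \<in> {0<..<1} \<times> {0<..} \<longrightarrow>
               Qp (fst x) (snd x) \<le> Rp (fst x) (snd x) \<and> Qm (fst x) (snd x) \<le> Rm (fst x) (snd x)"
    using QR by (rule eventually_mono) blast
  interpret c1: cmp hb c kB Z \<kappa>M \<kappa> a Qp Qm Rp Rm I I' T T'
    using phys Z meas kappa alb QR1 sol sol' by unfold_locales auto
  have part1: "AE x in lborel \<Otimes>\<^sub>M (lborel \<Otimes>\<^sub>M lborel).
            x \<in> {0<..<Z} \<times> ({-1<..<1} \<times> {0<..}) \<longrightarrow>
              I (fst x) (fst (snd x)) (snd (snd x)) \<le> I' (fst x) (fst (snd x)) (snd (snd x))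
              \<and> T (fst x) \<le> T' (fst x)"
    using c1.comparison unfolding dom3_def .
  show ?thesis
  proof (intro conjI impI)
    show "AE x in lborel \<Otimes>\<^sub>M (lborel \<Otimes>\<^sub>M lborel).
            x \<in> {0<..<Z} \<times> ({-1<..<1} \<times> {0<..}) \<longrightarrow>
              I (fst x) (fst (snd x)) (snd (snd x)) \<le> I' (fst x) (fst (snd x)) (snd (snd x))
              \<and> T (fst x) \<le> T' (fst x)" by (rule part1)
    assume eq: "AE x in lborel \<Otimes>\<^sub>M lborel. x \<in> {0<..<1} \<times> {0<..} \<longrightarrow>
              Qp (fst x) (snd x) = Rp (fst x) (snd x) \<and> Qm (fst x) (snd x) = Rm (fst x) (snd x)"
    have QR2: "AE x in lborel \<Otimes>\<^sub>M lborel. x \<in> {0<..<1} \<times> {0<..} \<longrightarrow>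
               Rp (fst x) (snd x) \<le> Qp (fst x) (snd x) \<and> Rm (fst x) (snd x) \<le> Qm (fst x) (snd x)"
      using eq by (rule eventually_mono) auto
    interpret c2: cmp hb c kB Z \<kappa>M \<kappa> a Rp Rm Qp Qm I' I T' T
      using phys Z meas kappa alb QR2 sol sol' by unfold_locales auto
    have part2: "AE x in lborel \<Otimes>\<^sub>M (lborel \<Otimes>\<^sub>M lborel).
            x \<in> {0<..<Z} \<times> ({-1<..<1} \<times> {0<..}) \<longrightarrow>
              I' (fst x) (fst (snd x)) (snd (snd x)) \<le> I (fst x) (fst (snd x)) (snd (snd x))
              \<and> T' (fst x) \<le> T (fst x)"
      using c2.comparison unfolding dom3_def .
    show "AE x in lborel \<Otimes>\<^sub>M (lborel \<Otimes>\<^sub>M lborel).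
                x \<in> {0<..<Z} \<times> ({-1<..<1} \<times> {0<..}) \<longrightarrow>
                  I (fst x) (fst (snd x)) (snd (snd x)) = I' (fst x) (fst (snd x)) (snd (snd x))
                  \<and> T (fst x) = T' (fst x)"
      using part1 part2 by eventually_elim auto
  qed
qed

end
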